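(* Let $2\le d\leq 4$ and let $\rho$ be a diagonal symmetric (DS) state acting on $\mathbb{C}^d\otimes\mathbb{C}^d$. Then $\rho$ is separable if and only if $\rho$ is PPT (i.e. $\rho^{T_B}\succeq 0$).
   Context: Let $\{\ket{0},\dots,\ket{d-1}\}$ be the computational basis of $\mathbb{C}^d$. Define $\ket{D_{ii}}=\ket{ii}$ and, for $i<j$, $\ket{D_{ij}}=(\ket{ij}+\ket{ji})/\sqrt{2}$. A state $\rho$ on $\mathbb{C}^d\otimes\mathbb{C}^d$ is diagonal symmetric (DS) if $\rho=\sum_{0\le i\le j<d}p_{ij}\ket{D_{ij}}\bra{D_{ij}}$ with $p_{ij}\ge 0$ and $\sum_{i\le j}p_{ij}=1$. A state is separable if it is a convex combination of product states $\rho^A\otimes\rho^B$. The partial transpose $\rho^{T_B}$ is taken with respect to the computational basis of the second factor. *)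

theory Defs
  imports Complex_Main
begin

text \<open>Operators on a finite-dimensional Hilbert space with orthonormal basis indexed by a
finite set S are represented as functions M :: 'i => 'i => complex (matrix entries);
only the entries with both indices in S are meaningful.
For C^d (x) C^d the basis is indexed by pairs (i,j) with i,j < d, where (i,j) stands for |i>|j>.\<close>

definition psd_on :: "'i set \<Rightarrow> ('i \<Rightarrow> 'i \<Rightarrow> complex) \<Rightarrow> bool" where
  "psd_on S M \<longleftrightarrow> (\<forall>v :: 'i \<Rightarrow> complex.
     (\<Sum>a\<in>S. \<Sum>b\<in>S. cnj (v a) * M a b * v b) \<in> \<real> \<and>
     0 \<le> Re (\<Sum>a\<in>S. \<Sum>b\<in>S. cnj (v a) * M a b * v b))"

definition trace_on :: "'i set \<Rightarrow> ('i \<Rightarrow> 'i \<Rightarrow> complex) \<Rightarrow> complex" where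
  "trace_on S M = (\<Sum>a\<in>S. M a a)"

definition density_on :: "'i set \<Rightarrow> ('i \<Rightarrow> 'i \<Rightarrow> complex) \<Rightarrow> bool" where
  "density_on S M \<longleftrightarrow> psd_on S M \<and> trace_on S M = 1"

definition bidx :: "nat \<Rightarrow> (nat \<times> nat) set" where
  "bidx d = {..<d} \<times> {..<d}"

text \<open>Separable: a finite convex combination of product states rho_A (x) rho_B,
  with (rho_A (x) rho_B)((i,j),(k,l)) = rho_A(i,k) * rho_B(j,l).\<close>
definition separable :: "nat \<Rightarrow> (nat \<times> nat \<Rightarrow> nat \<times> nat \<Rightarrow> complex) \<Rightarrow> bool" where
  "separable d \<rho> \<longleftrightarrow> (\<exists>(n::nat) (p :: nat \<Rightarrow> real) A B.
      (\<forall>m<n. 0 \<le> p m) \<and> (\<Sum>m<n. p m) = 1 \<and>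
      (\<forall>m<n. density_on {..<d} (A m) \<and> density_on {..<d} (B m)) \<and>
      (\<forall>i<d. \<forall>j<d. \<forall>k<d. \<forall>l<d.
          \<rho> (i, j) (k, l) = (\<Sum>m<n. complex_of_real (p m) * A m i k * B m j l)))"

definition partial_transpose_B :: "(nat \<times> nat \<Rightarrow> nat \<times> nat \<Rightarrow> complex) \<Rightarrow> (nat \<times> nat \<Rightarrow> nat \<times> nat \<Rightarrow> complex)" where
  "partial_transpose_B \<rho> = (\<lambda>(i, j) (k, l). \<rho> (i, l) (k, j))"

definition PPT :: "nat \<Rightarrow> (nat \<times> nat \<Rightarrow> nat \<times> nat \<Rightarrow> complex) \<Rightarrow> bool" where
  "PPT d \<rho> \<longleftrightarrow> psd_on (bidx d) (partial_transpose_B \<rho>)"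

definition Dvec :: "nat \<Rightarrow> nat \<Rightarrow> nat \<times> nat \<Rightarrow> complex" where
  "Dvec i j = (\<lambda>a. if i = j then (if a = (i, i) then 1 else 0)
                   else ((if a = (i, j) then 1 else 0) + (if a = (j, i) then 1 else 0))
                        / complex_of_real (sqrt 2))"

definition DS_state :: "nat \<Rightarrow> (nat \<times> nat \<Rightarrow> nat \<times> nat \<Rightarrow> complex) \<Rightarrow> bool" where
  "DS_state d \<rho> \<longleftrightarrow> (\<exists>p :: nat \<Rightarrow> nat \<Rightarrow> real.
      (\<forall>i j. i \<le> j \<and> j < d \<longrightarrow> 0 \<le> p i j) \<and>
      (\<Sum>(i, j)\<in>{(i, j). i \<le> j \<and> j < d}. p i j) = 1 \<and>
      (\<forall>a\<in>bidx d. \<forall>b\<in>bidx d.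
          \<rho> a b = (\<Sum>(i, j)\<in>{(i, j). i \<le> j \<and> j < d}.
                      complex_of_real (p i j) * Dvec i j a * cnj (Dvec i j b))))"

end

theory Submission
  imports Defs
begin


definition qf :: "'i set \<Rightarrow> ('i \<Rightarrow> 'i \<Rightarrow> complex) \<Rightarrow> ('i \<Rightarrow> complex) \<Rightarrow> complex" where
  "qf S M v = (\<Sum>a\<in>S. \<Sum>b\<in>S. cnj (v a) * M a b * v b)"

definition dl :: "'i \<Rightarrow> 'i \<Rightarrow> complex" where "dl k a = (if a = k then 1 else 0)"

lemma psd_on_qf: "psd_on S M \<longleftrightarrow> (\<forall>v. qf S M v \<in> \<real> \<and> 0 \<le> Re (qf S M v))"
  unfolding psd_on_def qf_def by simp

lemma sum_dl: "finite S \<Longrightarrow> k \<in> S \<Longrightarrow> (\<Sum>b\<in>S. dl k b * f b) = f k"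
proof -
  have "(\<Sum>b\<in>S. dl k b * f b) = (\<Sum>b\<in>S. if b = k then f b else 0)"
    by (rule sum.cong) (auto simp: dl_def)
  also assume "finite S" "k \<in> S"
  then have "(\<Sum>b\<in>S. if b = k then f b else 0) = f k" by (simp add: sum.delta')
  finally show ?thesis .
qed

lemma sum_dl': "finite S \<Longrightarrow> k \<in> S \<Longrightarrow> (\<Sum>b\<in>S. f b * dl k b) = f k"
  using sum_dl[of S k f] by (simp add: mult.commute)

lemma qf_add_delta:
  assumes "finite S" "k \<in> S"
  shows "qf S M (\<lambda>a. v a + c * dl k a) = qf S M v + cnj c * (\<Sum>b\<in>S. M k b * v b)
     + c * (\<Sum>a\<in>S. cnj (v a) * M a k) + cnj c * c * M k k"
proof -
  have e: "cnj (v a + c * dl k a) * M a b * (v b + c * dl k b) =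
     cnj (v a) * M a b * v b + dl k b * (c * cnj (v a) * M a k) + dl k a * (cnj c * M k b * v b)
     + dl k a * (dl k b * (cnj c * c * M k k))" for a b
    by (simp add: dl_def algebra_simps)
  have 1: "(\<Sum>a\<in>S. \<Sum>b\<in>S. dl k b * (c * cnj (v a) * M a k)) = c * (\<Sum>a\<in>S. cnj (v a) * M a k)"
    using assms by (simp add: sum_dl sum_distrib_left mult.assoc)
  have 2: "(\<Sum>a\<in>S. \<Sum>b\<in>S. dl k a * (cnj c * M k b * v b)) = cnj c * (\<Sum>b\<in>S. M k b * v b)"
    proof -
    have "(\<Sum>a\<in>S. \<Sum>b\<in>S. dl k a * (cnj c * M k b * v b)) = (\<Sum>a\<in>S. dl k a * (\<Sum>b\<in>S. cnj c * M k b * v b))"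
      by (simp add: sum_distrib_left)
    also have "\<dots> = (\<Sum>b\<in>S. cnj c * M k b * v b)" using assms by (rule sum_dl)
    finally show ?thesis by (simp add: sum_distrib_left mult.assoc)
  qed
  have 3: "(\<Sum>a\<in>S. \<Sum>b\<in>S. dl k a * (dl k b * (cnj c * c * M k k))) = cnj c * c * M k k"
    using assms by (simp add: sum_dl flip: sum_distrib_left)
  show ?thesis
    unfolding qf_def e sum.distrib 1 2 3 by simp
qed

lemma cnj_dl[simp]: "cnj (dl k a) = dl k a" by (simp add: dl_def)

lemma qf_zero: "qf S M (\<lambda>_. 0) = 0" by (simp add: qf_def)

lemma qf2:
  assumes "finite S" "a \<in> S" "b \<in> S"
  shows "qf S M (\<lambda>x. c * dl a x + e * dl b x) = cnj c * c * M a a + cnj e * c * M b a + e * cnj c * M a b + cnj e * e * M b b"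
proof -
  have "qf S M (\<lambda>x. 0 + c * dl a x) = cnj c * c * M a a"
    using qf_add_delta[OF assms(1,2), of M "\<lambda>_. 0" c] by (simp add: qf_zero)
  then have 1: "qf S M (\<lambda>x. c * dl a x) = cnj c * c * M a a" by simp
  have "qf S M (\<lambda>x. c * dl a x + e * dl b x) = qf S M (\<lambda>x. c * dl a x) + cnj e * (\<Sum>y\<in>S. M b y * (c * dl a y))
     + e * (\<Sum>y\<in>S. cnj (c * dl a y) * M y b) + cnj e * e * M b b"
    by (rule qf_add_delta[OF assms(1,3)])
  also have "(\<Sum>y\<in>S. M b y * (c * dl a y)) = c * M b a"
    using sum_dl'[OF assms(1,2), of "\<lambda>y. c * M b y"] by (simp add: algebra_simps)
  also have "(\<Sum>y\<in>S. cnj (c * dl a y) * M y b) = cnj c * M a b"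
    using sum_dl[OF assms(1,2), of "\<lambda>y. cnj c * M y b"] by (simp add: algebra_simps)
  finally show ?thesis using 1 by (simp add: algebra_simps)
qed

lemma psd_herm:
  assumes "psd_on S M" "finite S" "a \<in> S" "b \<in> S"
  shows "M a b = cnj (M b a)"
proof -
  have r1: "qf S M (\<lambda>x. 1 * dl a x + 1 * dl b x) \<in> \<real>" using assms(1) by (simp add: psd_on_qf)
  have r2: "qf S M (\<lambda>x. 1 * dl a x + \<i> * dl b x) \<in> \<real>" using assms(1) by (simp add: psd_on_qf)
  have r3: "qf S M (\<lambda>x. 1 * dl a x + 0 * dl b x) \<in> \<real>" using assms(1) by (simp add: psd_on_qf)
  have r4: "qf S M (\<lambda>x. 0 * dl a x + 1 * dl b x) \<in> \<real>" using assms(1) by (simp add: psd_on_qf)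
  note q = qf2[OF assms(2,3,4)]
  from r1 r2 r3 r4 show ?thesis unfolding q
    by (simp add: complex_is_Real_iff complex_eq_iff)
qed

lemma psd_diag:
  assumes "psd_on S M" "finite S" "a \<in> S"
  shows "M a a \<in> \<real>" "0 \<le> Re (M a a)"
proof -
  have "qf S M (\<lambda>x. 1 * dl a x + 0 * dl a x) = M a a" using qf2[OF assms(2,3,3), of M 1 0] by simp
  then show "M a a \<in> \<real>" "0 \<le> Re (M a a)" using assms(1) by (metis psd_on_qf)+
qed

lemma psd_zero_row:
  assumes "psd_on S M" "finite S" "a \<in> S" "b \<in> S" "M a a = 0"
  shows "M b a = 0" "M a b = 0"
proof -
  let ?z = "M b a"
  have h: "M a b = cnj ?z" using psd_herm[OF assms(1,2,3,4)] .
  have key: "0 \<le> Re (M b b) - 2 * t * (cmod ?z)^2" for t :: real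
  proof -
    let ?c = "- (of_real t) * cnj ?z"
    define A where "A = ?c * ?z + cnj ?c * cnj ?z"
    have q: "qf S M (\<lambda>x. ?c * dl a x + 1 * dl b x) = A + M b b"
      using qf2[OF assms(2,3,4), of M ?c 1] assms(5) h by (simp add: algebra_simps A_def)
    have r: "Re A = - 2 * t * (cmod ?z)^2"
      unfolding A_def cmod_power2 by (simp add: algebra_simps power2_eq_square)
    have "0 \<le> Re (qf S M (\<lambda>x. ?c * dl a x + 1 * dl b x))" using assms(1) by (simp add: psd_on_qf)
    then have "0 \<le> Re A + Re (M b b)" unfolding q by simp
    then show ?thesis unfolding r by simp
  qed
  show "M b a = 0"
  proof (rule ccontr)
    assume "M b a \<noteq> 0"
    then have p: "(cmod ?z)^2 > 0" by simp
    have "0 \<le> Re (M b b) - 2 * ((Re (M b b) + 1) / (2 * (cmod ?z)^2)) * (cmod ?z)^2" by (rule key)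
    also have "\<dots> = -1" using p by (simp add: field_simps)
    finally show False by simp
  qed
  then show "M a b = 0" using h by simp
qed

lemma qf_restrict_Suc:
  "qf {..<n} M v = qf {..<Suc n} M (\<lambda>x. if x < n then v x else 0)"
  unfolding qf_def by (simp add: lessThan_Suc sum.distrib)

lemma psd_restrict: "psd_on {..<Suc n} M \<Longrightarrow> psd_on {..<n} M"
  unfolding psd_on_qf using qf_restrict_Suc by metis

definition tr2 :: "nat \<Rightarrow> (nat \<Rightarrow> nat \<Rightarrow> complex) \<Rightarrow> (nat \<Rightarrow> nat \<Rightarrow> complex) \<Rightarrow> complex" where
  "tr2 n C B = (\<Sum>j<n. \<Sum>l<n. C j l * B l j)"

lemma schur_psd:
  assumes "psd_on {..<Suc n} B" "B n n \<noteq> 0"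
  shows "psd_on {..<Suc n} (\<lambda>l j. B l j - B l n * B n j / B n n)"
proof -
  let ?S = "{..<Suc n}"
  let ?b = "B n n"
  have fin: "finite ?S" and nS: "n \<in> ?S" by auto
  have breal: "?b \<in> \<real>" using psd_diag[OF assms(1) fin nS] by simp
  then have cb: "cnj ?b = ?b" by (simp add: Reals_cnj_iff)
  show ?thesis unfolding psd_on_qf
  proof
    fix v
    let ?y = "\<Sum>x\<in>?S. B n x * v x"
    have hy: "(\<Sum>a\<in>?S. cnj (v a) * B a n) = cnj ?y"
    proof -
      have "(\<Sum>a\<in>?S. cnj (v a) * B a n) = (\<Sum>a\<in>?S. cnj (B n a * v a))"
        by (rule sum.cong, simp, subst psd_herm[OF assms(1) fin _ nS], auto simp: mult.commute)
      then show ?thesis by (simp add: sum_distrib_left)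
    qed
    have e1: "qf ?S (\<lambda>l j. B l j - B l n * B n j / B n n) v = qf ?S B v - cnj ?y * ?y / ?b"
    proof -
      have "qf ?S (\<lambda>l j. B l j - B l n * B n j / B n n) v
         = qf ?S B v - (\<Sum>a\<in>?S. \<Sum>x\<in>?S. cnj (v a) * B a n * (B n x * v x) / ?b)"
        unfolding qf_def by (simp add: algebra_simps sum_subtractf del: sum.lessThan_Suc)
      also have "(\<Sum>a\<in>?S. \<Sum>x\<in>?S. cnj (v a) * B a n * (B n x * v x) / ?b) = (\<Sum>a\<in>?S. cnj (v a) * B a n) * ?y / ?b"
        by (simp add: sum_product sum_divide_distrib mult.assoc del: sum.lessThan_Suc)
      finally show ?thesis unfolding hy .
    qed
    have e2: "qf ?S B (\<lambda>a. v a + (- ?y / ?b) * dl n a) = qf ?S B v - cnj ?y * ?y / ?b"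
      unfolding qf_add_delta[OF fin nS] hy using assms(2) cb
      by (simp add: field_simps del: sum.lessThan_Suc)
    have "qf ?S B (\<lambda>a. v a + (- ?y / ?b) * dl n a) \<in> \<real> \<and> 0 \<le> Re (qf ?S B (\<lambda>a. v a + (- ?y / ?b) * dl n a))"
      using assms(1) by (simp add: psd_on_qf)
    then show "qf ?S (\<lambda>l j. B l j - B l n * B n j / B n n) v \<in> \<real> \<and> 0 \<le> Re (qf ?S (\<lambda>l j. B l j - B l n * B n j / B n n) v)"
      unfolding e1 e2[symmetric] .
  qed
qed

lemma tr2_Suc_zero:
  assumes "\<And>j. j < Suc n \<Longrightarrow> B n j = 0" "\<And>j. j < Suc n \<Longrightarrow> B j n = 0"
  shows "tr2 (Suc n) C B = tr2 n C B"
  using assms by (simp add: tr2_def)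

lemma trace_psd:
  "psd_on {..<n} B \<Longrightarrow> psd_on {..<n} C \<Longrightarrow> tr2 n C B \<in> \<real> \<and> 0 \<le> Re (tr2 n C B)"
proof (induction n arbitrary: B C)
  case 0
  then show ?case by (simp add: tr2_def)
next
  case (Suc n)
  let ?S = "{..<Suc n}"
  have fin: "finite ?S" and nS: "n \<in> ?S" by auto
  have zc: "tr2 (Suc n) C B' \<in> \<real> \<and> 0 \<le> Re (tr2 (Suc n) C B')" if p: "psd_on ?S B'" and z: "B' n n = 0" for B'
  proof -
    have "tr2 (Suc n) C B' = tr2 n C B'"
      by (rule tr2_Suc_zero; rule psd_zero_row[OF p fin nS _ z]; simp)
    then show ?thesis using Suc.IH[OF psd_restrict[OF p] psd_restrict[OF Suc.prems(2)]] by simp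
  qed
  show ?case
  proof (cases "B n n = 0")
    case True
    then show ?thesis using zc[OF Suc.prems(1)] by simp
  next
    case False
    let ?b = "B n n"
    let ?B' = "\<lambda>l j. B l j - B l n * B n j / B n n"
    have breal: "?b \<in> \<real>" and bnn: "0 \<le> Re ?b" using psd_diag[OF Suc.prems(1) fin nS] by simp_all
    then have bpos: "0 < Re ?b" using False by (metis complex_is_Real_iff complex_eq_iff order_le_less zero_complex.simps)
    have bof: "?b = of_real (Re ?b)" using breal by (simp add: of_real_Re)
    have p': "psd_on ?S ?B'" by (rule schur_psd[OF Suc.prems(1) False])
    have z': "?B' n n = 0" using False by simp
    have w: "qf ?S C (\<lambda>l. B l n) \<in> \<real> \<and> 0 \<le> Re (qf ?S C (\<lambda>l. B l n))"
      using Suc.prems(2) by (simp add: psd_on_qf)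
    have dec: "tr2 (Suc n) C B = tr2 (Suc n) C ?B' + qf ?S C (\<lambda>l. B l n) / ?b"
    proof -
      have "tr2 (Suc n) C B - tr2 (Suc n) C ?B' = (\<Sum>j\<in>?S. \<Sum>l\<in>?S. C j l * (B l n * B n j / ?b))"
        unfolding tr2_def by (simp add: algebra_simps sum_subtractf del: sum.lessThan_Suc)
      also have "\<dots> = (\<Sum>j\<in>?S. \<Sum>l\<in>?S. cnj (B j n) * C j l * B l n / ?b)"
      proof (rule sum.cong[OF refl], rule sum.cong[OF refl])
        fix j l assume "j \<in> ?S" "l \<in> ?S"
        have "B n j = cnj (B j n)" by (rule psd_herm[OF Suc.prems(1) fin nS \<open>j \<in> ?S\<close>])
        then show "C j l * (B l n * B n j / ?b) = cnj (B j n) * C j l * B l n / ?b" by simp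
      qed
      also have "\<dots> = qf ?S C (\<lambda>l. B l n) / ?b"
        unfolding qf_def by (simp add: sum_divide_distrib del: sum.lessThan_Suc)
      finally show ?thesis by (simp add: algebra_simps)
    qed
    have t1: "tr2 (Suc n) C ?B' \<in> \<real> \<and> 0 \<le> Re (tr2 (Suc n) C ?B')" by (rule zc[OF p' z'])
    obtain q where q: "qf ?S C (\<lambda>l. B l n) = of_real q" "q \<ge> 0"
      using w by (metis Reals_cases Re_complex_of_real)
    have "qf ?S C (\<lambda>l. B l n) / ?b = of_real (q / Re ?b)" using q bof by (metis of_real_divide)
    moreover have "q / Re ?b \<ge> 0" using q bpos by simp
    ultimately show ?thesis unfolding dec using t1
      by (simp add: Reals_add)
  qed
qed



lemma sum_bidx: "(\<Sum>a\<in>bidx d. f a) = (\<Sum>i<d. \<Sum>j<d. f (i, j))"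
  by (simp add: bidx_def sum.cartesian_product)

lemma swap4: "(\<Sum>i<d. \<Sum>j<d. \<Sum>k<d. \<Sum>l<d. G i j k l :: complex) = (\<Sum>j<d. \<Sum>l<d. \<Sum>i<d. \<Sum>k<d. G i j k l)"
proof -
  have "(\<Sum>i<d. \<Sum>j<d. \<Sum>k<d. \<Sum>l<d. G i j k l) = (\<Sum>i<d. \<Sum>j<d. \<Sum>l<d. \<Sum>k<d. G i j k l)"
    by (rule sum.cong[OF refl], rule sum.cong[OF refl], rule sum.swap)
  also have "\<dots> = (\<Sum>j<d. \<Sum>i<d. \<Sum>l<d. \<Sum>k<d. G i j k l)" by (rule sum.swap)
  also have "\<dots> = (\<Sum>j<d. \<Sum>l<d. \<Sum>i<d. \<Sum>k<d. G i j k l)"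
    by (rule sum.cong[OF refl], rule sum.swap)
  finally show ?thesis .
qed

lemma C_psd:
  assumes "psd_on {..<d} A"
  shows "psd_on {..<d} (\<lambda>j l. \<Sum>i<d. \<Sum>k<d. cnj (v (i, j)) * A i k * v (k, l))"
  unfolding psd_on_qf
proof
  fix w
  let ?x = "\<lambda>i. \<Sum>j<d. v (i, j) * w j"
  have "qf {..<d} (\<lambda>j l. \<Sum>i<d. \<Sum>k<d. cnj (v (i, j)) * A i k * v (k, l)) w
      = (\<Sum>j<d. \<Sum>l<d. \<Sum>i<d. \<Sum>k<d. cnj (v (i, j) * w j) * A i k * (v (k, l) * w l))"
    unfolding qf_def by (simp add: sum_distrib_left sum_distrib_right algebra_simps)
  also have "\<dots> = (\<Sum>i<d. \<Sum>j<d. \<Sum>k<d. \<Sum>l<d. cnj (v (i, j) * w j) * A i k * (v (k, l) * w l))"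
    by (rule swap4[symmetric])
  also have "\<dots> = (\<Sum>i<d. \<Sum>k<d. \<Sum>j<d. \<Sum>l<d. cnj (v (i, j) * w j) * A i k * (v (k, l) * w l))"
    by (rule sum.cong[OF refl], rule sum.swap)
  also have "\<dots> = qf {..<d} A ?x"
    unfolding qf_def by (simp add: sum_distrib_left sum_distrib_right algebra_simps)
  finally show "qf {..<d} (\<lambda>j l. \<Sum>i<d. \<Sum>k<d. cnj (v (i, j)) * A i k * v (k, l)) w \<in> \<real> \<and>
     0 \<le> Re (qf {..<d} (\<lambda>j l. \<Sum>i<d. \<Sum>k<d. cnj (v (i, j)) * A i k * v (k, l)) w)"
    using assms by (simp add: psd_on_qf)
qed

lemma swap5: "(\<Sum>m<n. \<Sum>i<d. \<Sum>j<d. \<Sum>k<d. \<Sum>l<d. G m i j k l :: complex)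
   = (\<Sum>i<d. \<Sum>j<d. \<Sum>k<d. \<Sum>l<d. \<Sum>m<n. G m i j k l)"
proof -
  have "(\<Sum>m<n. \<Sum>i<d. \<Sum>j<d. \<Sum>k<d. \<Sum>l<d. G m i j k l) = (\<Sum>i<d. \<Sum>m<n. \<Sum>j<d. \<Sum>k<d. \<Sum>l<d. G m i j k l)"
    by (rule sum.swap)
  also have "\<dots> = (\<Sum>i<d. \<Sum>j<d. \<Sum>m<n. \<Sum>k<d. \<Sum>l<d. G m i j k l)"
    by (rule sum.cong[OF refl], rule sum.swap)
  also have "\<dots> = (\<Sum>i<d. \<Sum>j<d. \<Sum>k<d. \<Sum>m<n. \<Sum>l<d. G m i j k l)"
    by (rule sum.cong[OF refl], rule sum.cong[OF refl], rule sum.swap)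
  also have "\<dots> = (\<Sum>i<d. \<Sum>j<d. \<Sum>k<d. \<Sum>l<d. \<Sum>m<n. G m i j k l)"
    by (rule sum.cong[OF refl], rule sum.cong[OF refl], rule sum.cong[OF refl], rule sum.swap)
  finally show ?thesis .
qed

lemma sep_PPT:
  assumes "separable d \<rho>"
  shows "PPT d \<rho>"
proof -
  obtain n :: nat and p :: "nat \<Rightarrow> real" and A B where p0: "\<forall>m<n. 0 \<le> p m" and dens: "\<forall>m<n. density_on {..<d} (A m) \<and> density_on {..<d} (B m)"
    and rho: "\<forall>i<d. \<forall>j<d. \<forall>k<d. \<forall>l<d. \<rho> (i, j) (k, l) = (\<Sum>m<n. complex_of_real (p m) * A m i k * B m j l)"
    using assms unfolding separable_def by (elim exE conjE) (rule that, assumption+)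
  show ?thesis unfolding PPT_def psd_on_qf
  proof
    fix v :: "nat \<times> nat \<Rightarrow> complex"
    define C where "C m (j::nat) (l::nat) = (\<Sum>i<d. \<Sum>k<d. cnj (v (i, j)) * A m i k * v (k, l))" for m j l
    have Cpsd: "psd_on {..<d} (C m)" if "m < n" for m
      unfolding C_def[abs_def] using dens that by (auto simp: density_on_def intro!: C_psd)
    have tr: "tr2 d (C m) (B m) \<in> \<real> \<and> 0 \<le> Re (tr2 d (C m) (B m))" if "m < n" for m
      using trace_psd[of d "B m" "C m"] Cpsd[OF that] dens that by (auto simp: density_on_def)
    have "qf (bidx d) (partial_transpose_B \<rho>) v = (\<Sum>i<d. \<Sum>j<d. \<Sum>k<d. \<Sum>l<d. cnj (v (i, j)) * \<rho> (i, l) (k, j) * v (k, l))"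
      unfolding qf_def sum_bidx partial_transpose_B_def by simp
    also have "\<dots> = (\<Sum>i<d. \<Sum>j<d. \<Sum>k<d. \<Sum>l<d. \<Sum>m<n. complex_of_real (p m) * (cnj (v (i, j)) * A m i k * v (k, l) * B m l j))"
      by (intro sum.cong refl) (simp add: rho sum_distrib_left sum_distrib_right algebra_simps)
    also have "\<dots> = (\<Sum>m<n. \<Sum>i<d. \<Sum>j<d. \<Sum>k<d. \<Sum>l<d. complex_of_real (p m) * (cnj (v (i, j)) * A m i k * v (k, l) * B m l j))"
      by (rule swap5[symmetric])
    also have "\<dots> = (\<Sum>m<n. complex_of_real (p m) * tr2 d (C m) (B m))"
    proof (rule sum.cong[OF refl])
      fix m
      have "(\<Sum>i<d. \<Sum>j<d. \<Sum>k<d. \<Sum>l<d. complex_of_real (p m) * (cnj (v (i, j)) * A m i k * v (k, l) * B m l j))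
         = (\<Sum>j<d. \<Sum>l<d. \<Sum>i<d. \<Sum>k<d. complex_of_real (p m) * (cnj (v (i, j)) * A m i k * v (k, l) * B m l j))"
        by (rule swap4)
      also have "\<dots> = complex_of_real (p m) * tr2 d (C m) (B m)"
        unfolding tr2_def C_def by (simp add: sum_distrib_left sum_distrib_right)
      finally show "(\<Sum>i<d. \<Sum>j<d. \<Sum>k<d. \<Sum>l<d. complex_of_real (p m) * (cnj (v (i, j)) * A m i k * v (k, l) * B m l j))
         = complex_of_real (p m) * tr2 d (C m) (B m)" .
    qed
    finally have eq: "qf (bidx d) (partial_transpose_B \<rho>) v = (\<Sum>m<n. complex_of_real (p m) * tr2 d (C m) (B m))" .
    have "(\<Sum>m<n. complex_of_real (p m) * tr2 d (C m) (B m)) \<in> \<real> \<and> 0 \<le> Re (\<Sum>m<n. complex_of_real (p m) * tr2 d (C m) (B m))"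
    proof
      show "(\<Sum>m<n. complex_of_real (p m) * tr2 d (C m) (B m)) \<in> \<real>"
        using tr by (auto intro!: sum_in_Reals Reals_mult)
      have "Re (\<Sum>m<n. complex_of_real (p m) * tr2 d (C m) (B m)) = (\<Sum>m<n. p m * Re (tr2 d (C m) (B m)))"
        by (simp add: Re_sum)
      also have "\<dots> \<ge> 0" using tr p0 by (auto intro!: sum_nonneg)
      finally show "0 \<le> Re (\<Sum>m<n. complex_of_real (p m) * tr2 d (C m) (B m))" .
    qed
    then show "qf (bidx d) (partial_transpose_B \<rho>) v \<in> \<real> \<and> 0 \<le> Re (qf (bidx d) (partial_transpose_B \<rho>) v)"
      unfolding eq .
  qed
qed



definition rqf :: "nat \<Rightarrow> (nat \<Rightarrow> nat \<Rightarrow> real) \<Rightarrow> (nat \<Rightarrow> real) \<Rightarrow> real" where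
  "rqf n A v = (\<Sum>i<n. \<Sum>j<n. v i * A i j * v j)"

definition dnn :: "nat \<Rightarrow> (nat \<Rightarrow> nat \<Rightarrow> real) \<Rightarrow> bool" where
  "dnn n A \<longleftrightarrow> (\<forall>i<n. \<forall>j<n. A i j = A j i \<and> 0 \<le> A i j) \<and> (\<forall>v. 0 \<le> rqf n A v)"

definition cpm :: "nat \<Rightarrow> (nat \<Rightarrow> nat \<Rightarrow> real) \<Rightarrow> bool" where
  "cpm n A \<longleftrightarrow> (\<exists>U. (\<forall>u\<in>set U. \<forall>i. 0 \<le> u i) \<and> (\<forall>i<n. \<forall>j<n. A i j = (\<Sum>u\<leftarrow>U. u i * u j)))"

definition rdl :: "nat \<Rightarrow> nat \<Rightarrow> real" where "rdl k a = (if a = k then 1 else 0)"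

lemma sum_rdl: "k < n \<Longrightarrow> (\<Sum>b<n. rdl k b * f b) = f k"
proof -
  assume k: "k < n"
  have "(\<Sum>b<n. rdl k b * f b) = (\<Sum>b<n. if b = k then f b else 0)"
    by (rule sum.cong) (auto simp: rdl_def)
  also have "\<dots> = f k" using k by (simp add: sum.delta')
  finally show ?thesis .
qed

lemma rqf_add_delta:
  assumes "k < n"
  shows "rqf n A (\<lambda>a. v a + c * rdl k a) = rqf n A v + c * (\<Sum>b<n. A k b * v b)
     + c * (\<Sum>a<n. v a * A a k) + c * c * A k k"
proof -
  have e: "(v a + c * rdl k a) * A a b * (v b + c * rdl k b) =
     v a * A a b * v b + rdl k b * (c * v a * A a k) + rdl k a * (c * A k b * v b)
     + rdl k a * (rdl k b * (c * c * A k k))" for a b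
    by (simp add: rdl_def algebra_simps)
  have 1: "(\<Sum>a<n. \<Sum>b<n. rdl k b * (c * v a * A a k)) = c * (\<Sum>a<n. v a * A a k)"
    using assms by (simp add: sum_rdl sum_distrib_left mult.assoc)
  have 2: "(\<Sum>a<n. \<Sum>b<n. rdl k a * (c * A k b * v b)) = c * (\<Sum>b<n. A k b * v b)"
  proof -
    have "(\<Sum>a<n. \<Sum>b<n. rdl k a * (c * A k b * v b)) = (\<Sum>a<n. rdl k a * (\<Sum>b<n. c * A k b * v b))"
      by (simp add: sum_distrib_left)
    also have "\<dots> = (\<Sum>b<n. c * A k b * v b)" using assms by (rule sum_rdl)
    finally show ?thesis by (simp add: sum_distrib_left mult.assoc)
  qed
  have 3: "(\<Sum>a<n. \<Sum>b<n. rdl k a * (rdl k b * (c * c * A k k))) = c * c * A k k"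
    using assms by (simp add: sum_rdl flip: sum_distrib_left)
  show ?thesis
    unfolding rqf_def e sum.distrib 1 2 3 by simp
qed

lemma rqf_zero: "rqf n A (\<lambda>_. 0) = 0" by (simp add: rqf_def)

lemma rqf2:
  assumes "a < n" "b < n"
  shows "rqf n A (\<lambda>x. s * rdl a x + t * rdl b x) = s * s * A a a + t * s * A b a + t * s * A a b + t * t * A b b"
proof -
  have "rqf n A (\<lambda>x. 0 + s * rdl a x) = s * s * A a a"
    using rqf_add_delta[OF assms(1), of A "\<lambda>_. 0" s] by (simp add: rqf_zero)
  then have 1: "rqf n A (\<lambda>x. s * rdl a x) = s * s * A a a" by simp
  have "rqf n A (\<lambda>x. s * rdl a x + t * rdl b x) = rqf n A (\<lambda>x. s * rdl a x) + t * (\<Sum>y<n. A b y * (s * rdl a y))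
     + t * (\<Sum>y<n. (s * rdl a y) * A y b) + t * t * A b b"
    by (rule rqf_add_delta[OF assms(2)])
  also have "(\<Sum>y<n. A b y * (s * rdl a y)) = s * A b a"
    using sum_rdl[OF assms(1), of "\<lambda>y. s * A b y"] by (simp add: algebra_simps)
  also have "(\<Sum>y<n. (s * rdl a y) * A y b) = s * A a b"
    using sum_rdl[OF assms(1), of "\<lambda>y. s * A y b"] by (simp add: algebra_simps)
  finally show ?thesis using 1 by (simp add: algebra_simps)
qed

lemma dnn_offdiag:
  assumes "dnn n A" "i < n" "j < n"
  shows "(A i j)^2 \<le> A i i * A j j"
proof -
  have sym: "A j i = A i j" and nn: "0 \<le> A i j" "0 \<le> A i i" "0 \<le> A j j"
    using assms unfolding dnn_def by auto
  have q: "0 \<le> s * s * A i i + 2 * s * t * A i j + t * t * A j j" for s t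
  proof -
    have "0 \<le> rqf n A (\<lambda>x. s * rdl i x + t * rdl j x)" using assms(1) unfolding dnn_def by blast
    then show ?thesis using rqf2[OF assms(2,3), of A s t] sym by (simp add: algebra_simps)
  qed
  show ?thesis
  proof (cases "A i i = 0")
    case True
    have "A i j = 0"
    proof (rule ccontr)
      assume "A i j \<noteq> 0"
      then have "A i j > 0" using nn by simp
      have "0 \<le> (- (A j j + 1) / (2 * A i j)) * (- (A j j + 1) / (2 * A i j)) * A i i + 2 * (- (A j j + 1) / (2 * A i j)) * 1 * A i j + 1 * 1 * A j j"
        by (rule q)
      also have "\<dots> = -1" using True \<open>A i j > 0\<close> by (simp add: field_simps)
      finally show False by simp
    qed
    then show ?thesis using True by simp
  next
    case False
    then have pos: "A i i > 0" using nn by simp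
    have "0 \<le> (- A i j) * (- A i j) * A i i + 2 * (- A i j) * (A i i) * A i j + A i i * A i i * A j j"
      by (rule q)
    then have "0 \<le> A i i * (A i i * A j j - (A i j)^2)" by (simp add: algebra_simps power2_eq_square)
    then show ?thesis using pos by (simp add: zero_le_mult_iff)
  qed
qed

definition nzs :: "nat \<Rightarrow> (nat \<Rightarrow> nat \<Rightarrow> real) \<Rightarrow> (nat \<times> nat) set" where
  "nzs n A = {(i, j). i < n \<and> j < n \<and> A i j \<noteq> 0}"

lemma finite_nzs: "finite (nzs n A)"
  by (rule finite_subset[of _ "{..<n} \<times> {..<n}"]) (auto simp: nzs_def)

lemma elim_step:
  assumes dA: "dnn n A" and k: "k < n" and akk: "0 < A k k"
    and smp: "\<forall>i<n. \<forall>j<n. i \<noteq> k \<longrightarrow> j \<noteq> k \<longrightarrow> i \<noteq> j \<longrightarrow> 0 < A k i \<longrightarrow> 0 < A k j \<longrightarrow> 0 < A i j"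
  shows "\<exists>A' u. dnn n A' \<and> (\<forall>i. 0 \<le> u i) \<and> (\<forall>i<n. \<forall>j<n. A i j = A' i j + u i * u j)
     \<and> nzs n A' \<subset> nzs n A"
proof -
  let ?a = "A k k"
  have sym: "\<And>i j. i < n \<Longrightarrow> j < n \<Longrightarrow> A j i = A i j" and nn: "\<And>i j. i < n \<Longrightarrow> j < n \<Longrightarrow> 0 \<le> A i j"
    using dA unfolding dnn_def by auto
  define I where "I = {(i, j). i < n \<and> j < n \<and> i \<noteq> k \<and> j \<noteq> k \<and> i \<noteq> j \<and> 0 < A k i \<and> 0 < A k j}"
  define R where "R = (\<lambda>(i, j). A i j * ?a / (A k i * A k j)) ` I"
  have finI: "finite I" by (rule finite_subset[of _ "{..<n} \<times> {..<n}"]) (auto simp: I_def)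
  define T where "T = insert 1 R"
  have finT: "finite T" using finI by (simp add: T_def R_def)
  define t where "t = Min T"
  have tT: "t \<in> T" unfolding t_def by (rule Min_in[OF finT]) (simp add: T_def)
  have tle1: "t \<le> 1" unfolding t_def by (rule Min_le[OF finT]) (simp add: T_def)
  have tleR: "t \<le> A i j * ?a / (A k i * A k j)" if "(i, j) \<in> I" for i j
    unfolding t_def by (rule Min_le[OF finT]) (use that in \<open>force simp: T_def R_def\<close>)
  have tpos: "0 < t"
  proof -
    have "\<forall>x\<in>T. 0 < x"
    proof
      fix x assume "x \<in> T"
      then show "0 < x"
      proof (cases "x = 1")
        case False
        with \<open>x \<in> T\<close> obtain i j where ij: "(i, j) \<in> I" "x = A i j * ?a / (A k i * A k j)"
          by (auto simp: T_def R_def)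
        then have "0 < A i j" using smp by (auto simp: I_def)
        then show ?thesis using ij akk by (auto simp: I_def)
      qed simp
    qed
    then show ?thesis unfolding t_def using finT by (simp add: T_def)
  qed
  define A' where "A' i j = A i j - t * A k i * A k j / ?a" for i j
  define u where "u i = (if i < n then sqrt (t / ?a) * A k i else 0)" for i
  have u0: "\<forall>i. 0 \<le> u i" using nn k tpos akk by (auto simp: u_def)
  have dec: "\<forall>i<n. \<forall>j<n. A i j = A' i j + u i * u j"
  proof (intro allI impI)
    fix i j assume "i < n" "j < n"
    have "u i * u j = (sqrt (t / ?a) * sqrt (t / ?a)) * A k i * A k j"
      using \<open>i < n\<close> \<open>j < n\<close> by (simp add: u_def del: real_sqrt_mult_self)
    also have "sqrt (t / ?a) * sqrt (t / ?a) = t / ?a" using tpos akk by simp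
    finally show "A i j = A' i j + u i * u j" by (simp add: A'_def)
  qed
  have A'nn: "0 \<le> A' i j" if "i < n" "j < n" for i j
  proof -
    consider "i = k" | "j = k" "i \<noteq> k" | "i = j" "i \<noteq> k" | "i \<noteq> j" "i \<noteq> k" "j \<noteq> k" by blast
    then show ?thesis
    proof cases
      case 1
      have "A' i j = A k j * (1 - t)" using 1 akk by (simp add: A'_def field_simps)
      then show ?thesis using nn[OF k that(2)] tle1 by simp
    next
      case 2
      have "A' i j = A i k * (1 - t)" using 2 akk sym[OF that(1) k] by (simp add: A'_def field_simps)
      then show ?thesis using nn[OF that(1) k] tle1 by simp
    next
      case 3
      have o: "(A k i)^2 \<le> ?a * A i i" using dnn_offdiag[OF dA k that(1)] .
      have "t * A k i * A k i / ?a \<le> 1 * A k i * A k i / ?a"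
        using tle1 akk by (intro divide_right_mono mult_right_mono) (auto simp: nn[OF k that(1)])
      also have "\<dots> \<le> A i i" using o akk by (simp add: field_simps power2_eq_square)
      finally show ?thesis using 3 by (simp add: A'_def)
    next
      case 4
      show ?thesis
      proof (cases "0 < A k i \<and> 0 < A k j")
        case True
        then have "(i, j) \<in> I" using 4 that by (simp add: I_def)
        from tleR[OF this] have "t * (A k i * A k j) \<le> A i j * ?a"
          using True akk by (simp add: field_simps)
        then show ?thesis using akk by (simp add: A'_def field_simps)
      next
        case False
        then have "A k i = 0 \<or> A k j = 0" using nn k that by force
        then show ?thesis using nn that by (auto simp: A'_def)
      qed
    qed
  qed
  have psd: "0 \<le> rqf n A' v" for v
  proof -
    let ?y = "\<Sum>b<n. A k b * v b"
    have hy: "(\<Sum>b<n. v b * A b k) = ?y"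
      by (rule sum.cong) (auto simp: sym k)
    have "rqf n A' v = rqf n A v - t / ?a * (?y * ?y)"
    proof -
      have "rqf n A' v = rqf n A v - (\<Sum>i<n. \<Sum>j<n. t / ?a * ((A k i * v i) * (A k j * v j)))"
        unfolding rqf_def A'_def by (simp add: algebra_simps sum_subtractf)
      also have "(\<Sum>i<n. \<Sum>j<n. t / ?a * ((A k i * v i) * (A k j * v j))) = t / ?a * (?y * ?y)"
        unfolding sum_product by (simp only: sum_distrib_left)
      finally show ?thesis .
    qed
    moreover have "rqf n A (\<lambda>x. v x + (- ?y / ?a) * rdl k x) = rqf n A v - ?y * ?y / ?a"
      unfolding rqf_add_delta[OF k] hy using akk by (simp add: field_simps)
    moreover have "0 \<le> rqf n A (\<lambda>x. v x + (- ?y / ?a) * rdl k x)" using dA by (simp add: dnn_def)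
    moreover have "t / ?a * (?y * ?y) \<le> ?y * ?y / ?a"
    proof -
      have "t * (?y * ?y) \<le> 1 * (?y * ?y)" using tle1 by (intro mult_right_mono) auto
      then show ?thesis using akk by (simp add: field_simps)
    qed
    ultimately show ?thesis by linarith
  qed
  have dA': "dnn n A'"
    unfolding dnn_def using A'nn psd sym by (auto simp: A'_def)
  have sub: "nzs n A' \<subseteq> nzs n A"
  proof
    fix x assume "x \<in> nzs n A'"
    then obtain i j where x: "x = (i, j)" "i < n" "j < n" "A' i j \<noteq> 0" by (auto simp: nzs_def)
    have "A' i j \<le> A i j" using dec x u0 by (metis le_add_same_cancel1 zero_le_mult_iff)
    then have "A i j \<noteq> 0" using A'nn[OF x(2,3)] x(4) by linarith
    then show "x \<in> nzs n A" using x by (simp add: nzs_def)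
  qed
  have ne: "nzs n A' \<noteq> nzs n A"
  proof (cases "t = 1")
    case True
    have "A' k k = 0" using True akk by (simp add: A'_def)
    moreover have "(k, k) \<in> nzs n A" using k akk by (simp add: nzs_def)
    ultimately show ?thesis by (auto simp: nzs_def)
  next
    case False
    then have "t \<in> R" using tT by (simp add: T_def)
    then obtain i j where ij: "(i, j) \<in> I" "t = A i j * ?a / (A k i * A k j)" by (auto simp: R_def)
    have pos: "0 < A k i" "0 < A k j" "i < n" "j < n" using ij(1) by (auto simp: I_def)
    have "0 < A i j" using smp ij(1) by (auto simp: I_def)
    moreover have "A' i j = 0" using ij(2) pos akk by (simp add: A'_def field_simps)
    ultimately show ?thesis using pos by (auto simp: nzs_def)
  qed
  show ?thesis using dA' u0 dec sub ne by blast
qed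



definition evec :: "nat \<Rightarrow> nat \<Rightarrow> real \<Rightarrow> real \<Rightarrow> nat \<Rightarrow> real" where
  "evec i j a b = (\<lambda>m. if m = i then a else if m = j then b else 0)"

lemma sqpair:
  fixes e vi vj :: real
  assumes h: "0 < e" "0 < vi" "0 < vj"
  shows "\<exists>g g'. 0 \<le> g \<and> 0 \<le> g' \<and> g * g' = e \<and> g * g = e * vj / vi \<and> g' * g' = e * vi / vj"
proof (intro exI conjI)
  have "sqrt (e * vj / vi) * sqrt (e * vi / vj) = sqrt ((e * vj / vi) * (e * vi / vj))" by (rule real_sqrt_mult[symmetric])
  also have "(e * vj / vi) * (e * vi / vj) = e * e" using h by (simp add: field_simps)
  also have "sqrt (e * e) = e" using h by simp
  finally show "sqrt (e * vj / vi) * sqrt (e * vi / vj) = e" .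
  show "sqrt (e * vj / vi) * sqrt (e * vj / vi) = e * vj / vi" using h by simp
  show "sqrt (e * vi / vj) * sqrt (e * vi / vj) = e * vi / vj" using h by simp
  show "0 \<le> sqrt (e * vj / vi)" "0 \<le> sqrt (e * vi / vj)" using h by simp_all
qed

lemma sqone: "0 \<le> (u::real) \<Longrightarrow> \<exists>h. 0 \<le> h \<and> h * h = u"
  by (rule exI[of _ "sqrt u"]) simp

lemma c4_cp:
  assumes dA: "dnn n A" and lt: "p < n" "q < n" "r < n" "s < n"
    and dist: "distinct [p, q, r, s]" and all: "\<forall>m<n. m \<in> {p, q, r, s}"
    and pos: "0 < A p q" "0 < A q r" "0 < A r s" "0 < A s p"
    and zer: "A p r = 0" "A q s = 0"
  shows "cpm n A"
proof -
  have sym: "\<And>i j. i < n \<Longrightarrow> j < n \<Longrightarrow> A j i = A i j" and nn: "\<And>i j. i < n \<Longrightarrow> j < n \<Longrightarrow> 0 \<le> A i j"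
    using dA unfolding dnn_def by auto
  have set: "{..<n} = {p, q, r, s}" using all lt by auto
  define a where "a = A p p"
  define b where "b = A q q"
  define c where "c = A r r"
  define dd where "dd = A s s"
  define x where "x = A p q"
  define y where "y = A q r"
  define z where "z = A r s"
  define w where "w = A s p"
  have dpos: "0 < a" "0 < b" "0 < c" "0 < dd"
  proof -
    have "(A p q)^2 \<le> A p p * A q q" "(A r s)^2 \<le> A r r * A s s"
      using dnn_offdiag[OF dA] lt by auto
    moreover have "0 \<le> A p p" "0 \<le> A q q" "0 \<le> A r r" "0 \<le> A s s" using nn lt by auto
    ultimately show "0 < a" "0 < b" "0 < c" "0 < dd" using pos unfolding a_def b_def c_def dd_def
      by (metis less_eq_real_def mult_eq_0_iff mult_zero_left not_le zero_less_power)+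
  qed
  have xyzw: "0 < x" "0 < y" "0 < z" "0 < w" using pos by (auto simp: x_def y_def z_def w_def)
  have ent: "A p p = a" "A q q = b" "A r r = c" "A s s = dd" "A p q = x" "A q p = x" "A q r = y" "A r q = y"
    "A r s = z" "A s r = z" "A s p = w" "A p s = w" "A p r = 0" "A r p = 0" "A q s = 0" "A s q = 0"
    using sym lt zer by (auto simp: a_def b_def c_def dd_def x_def y_def z_def w_def)
  have rq: "rqf n A v = a * v p * v p + b * v q * v q + c * v r * v r + dd * v s * v s
      + 2 * x * v p * v q + 2 * y * v q * v r + 2 * z * v r * v s + 2 * w * v s * v p" for v
    unfolding rqf_def set using dist by (simp add: ent algebra_simps)
  define \<alpha> where "\<alpha> = a - x^2 / b - w^2 / dd"
  define \<beta> where "\<beta> = c - y^2 / b - z^2 / dd"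
  define \<gamma> where "\<gamma> = x * y / b + w * z / dd"
  have gpos: "0 < \<gamma>" using xyzw dpos by (simp add: \<gamma>_def add_pos_pos)
  have Q: "0 \<le> \<alpha> * s0 * s0 + \<beta> * t0 * t0 - 2 * \<gamma> * s0 * t0" for s0 t0
  proof -
    define V where "V = (\<lambda>m. if m = p then s0 else if m = q then - (x * s0 + y * t0) / b
        else if m = r then t0 else if m = s then - (w * s0 + z * t0) / dd else 0)"
    have "0 \<le> rqf n A V" using dA by (simp add: dnn_def)
    also have "rqf n A V = \<alpha> * s0 * s0 + \<beta> * t0 * t0 - 2 * \<gamma> * s0 * t0"
      unfolding rq using dist dpos
      by (simp add: V_def \<alpha>_def \<beta>_def \<gamma>_def field_simps power2_eq_square)
    finally show ?thesis .
  qed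
  have apos: "0 < \<alpha>"
  proof (rule ccontr)
    assume "\<not> 0 < \<alpha>"
    moreover have "0 \<le> \<alpha>" using Q[of 1 0] by simp
    ultimately have "\<alpha> = 0" by simp
    then have "0 \<le> \<beta> - 2 * \<gamma> * ((\<beta> + 1) / (2 * \<gamma>))" using Q[of "(\<beta> + 1) / (2 * \<gamma>)" 1] by simp
    also have "\<dots> = -1" using gpos by (simp add: field_simps)
    finally show False by simp
  qed
  have bpos: "0 < \<beta>"
  proof (rule ccontr)
    assume "\<not> 0 < \<beta>"
    moreover have "0 \<le> \<beta>" using Q[of 0 1] by simp
    ultimately have "\<beta> = 0" by simp
    then have "0 \<le> \<alpha> - 2 * \<gamma> * ((\<alpha> + 1) / (2 * \<gamma>))" using Q[of 1 "(\<alpha> + 1) / (2 * \<gamma>)"] by simp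
    also have "\<dots> = -1" using gpos by (simp add: field_simps)
    finally show False by simp
  qed
  define vp where "vp = sqrt \<beta>"
  define vr where "vr = sqrt \<alpha>"
  have vpr: "0 < vp" "0 < vr" "vp * vp = \<beta>" "vr * vr = \<alpha>" using apos bpos by (auto simp: vp_def vr_def)
  have gle: "\<gamma> \<le> vp * vr"
  proof -
    have "0 \<le> \<alpha> * vp * vp + \<beta> * vr * vr - 2 * \<gamma> * vp * vr" by (rule Q)
    then have "\<gamma> * (vp * vr) \<le> (vp * vr) * (vp * vr)" using vpr by (simp add: algebra_simps)
    then show ?thesis using vpr by (simp add: mult_le_cancel_right)
  qed
  define vq where "vq = (x * vp + y * vr) / b"
  define vs where "vs = (w * vp + z * vr) / dd"
  have vqs: "0 < vq" "0 < vs" using vpr xyzw dpos by (auto simp: vq_def vs_def add_pos_pos)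
  define hp where "hp = a - x * vq / vp - w * vs / vp"
  define hr where "hr = c - y * vq / vr - z * vs / vr"
  have hp0: "0 \<le> hp"
  proof -
    have "a * vp - x * vq - w * vs = \<alpha> * vp - \<gamma> * vr"
      using dpos by (simp add: vq_def vs_def \<alpha>_def \<gamma>_def field_simps power2_eq_square)
    also have "\<alpha> * vp - \<gamma> * vr \<ge> 0"
    proof -
      have "\<gamma> * vr \<le> vp * vr * vr" using mult_right_mono[OF gle, of vr] vpr(2) by simp
      also have "vp * vr * vr = \<alpha> * vp" using vpr(4) by (simp add: algebra_simps)
      finally show ?thesis by simp
    qed
    finally have "0 \<le> (a * vp - x * vq - w * vs) / vp" using vpr by simp
    moreover have "hp = (a * vp - x * vq - w * vs) / vp" using vpr(1) by (simp add: hp_def field_simps)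
    ultimately show ?thesis by simp
  qed
  have hr0: "0 \<le> hr"
  proof -
    have "c * vr - y * vq - z * vs = \<beta> * vr - \<gamma> * vp"
      using dpos by (simp add: vq_def vs_def \<beta>_def \<gamma>_def field_simps power2_eq_square)
    also have "\<beta> * vr - \<gamma> * vp \<ge> 0"
    proof -
      have "\<gamma> * vp \<le> vp * vr * vp" using mult_right_mono[OF gle, of vp] vpr(1) by simp
      also have "vp * vr * vp = \<beta> * vr" using vpr(3) by (simp add: algebra_simps)
      finally show ?thesis by simp
    qed
    finally have "0 \<le> (c * vr - y * vq - z * vs) / vr" using vpr by simp
    moreover have "hr = (c * vr - y * vq - z * vs) / vr" using vpr(2) by (simp add: hr_def field_simps)
    ultimately show ?thesis by simp
  qed
  have bq: "b = x * vp / vq + y * vr / vq"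
  proof -
    have "x * vp + y * vr = b * vq" using dpos by (simp add: vq_def)
    then show ?thesis using vqs by (simp add: field_simps)
  qed
  have ds: "dd = w * vp / vs + z * vr / vs"
  proof -
    have "w * vp + z * vr = dd * vs" using dpos by (simp add: vs_def)
    then show ?thesis using vqs by (simp add: field_simps)
  qed
  obtain g1 g2 where g1: "0 \<le> g1" "0 \<le> g2" "g1 * g2 = x" "g1 * g1 = x * vq / vp" "g2 * g2 = x * vp / vq"
    using sqpair[of x vp vq] xyzw vpr vqs by blast
  obtain g3 g4 where g2: "0 \<le> g3" "0 \<le> g4" "g3 * g4 = y" "g3 * g3 = y * vr / vq" "g4 * g4 = y * vq / vr"
    using sqpair[of y vq vr] xyzw vpr vqs by blast
  obtain g5 g6 where g3: "0 \<le> g5" "0 \<le> g6" "g5 * g6 = z" "g5 * g5 = z * vs / vr" "g6 * g6 = z * vr / vs"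
    using sqpair[of z vr vs] xyzw vpr vqs by blast
  obtain g7 g8 where g4: "0 \<le> g7" "0 \<le> g8" "g7 * g8 = w" "g7 * g7 = w * vp / vs" "g8 * g8 = w * vs / vp"
    using sqpair[of w vs vp] xyzw vpr vqs by blast
  obtain h1 h2 where h: "0 \<le> h1" "0 \<le> h2" "h1 * h1 = hp" "h2 * h2 = hr"
    using sqone[OF hp0] sqone[OF hr0] by blast
  have g1': "g2 * g1 = x" using g1 by (simp add: mult.commute)
  have g2': "g4 * g3 = y" using g2 by (simp add: mult.commute)
  have g3': "g6 * g5 = z" using g3 by (simp add: mult.commute)
  have g4': "g8 * g7 = w" using g4 by (simp add: mult.commute)
  define U where "U = [evec p q g1 g2, evec q r g3 g4, evec r s g5 g6, evec s p g7 g8,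
                       evec p p h1 0, evec r r h2 0]"
  have Unn: "\<forall>u\<in>set U. \<forall>i. 0 \<le> u i" using g1 g2 g3 g4 h by (auto simp: U_def evec_def)
  have pp: "a = x * vq / vp + w * vs / vp + hp" by (simp add: hp_def)
  have rr: "c = y * vq / vr + z * vs / vr + hr" by (simp add: hr_def)
  have kpp: "A p p = (\<Sum>u\<leftarrow>U. u p * u p)" using dist
    by (simp add: U_def evec_def ent g1 g2 g3 g4 h g1' g2' g3' g4'; simp add: pp rr bq ds)
  have kpq: "A p q = (\<Sum>u\<leftarrow>U. u p * u q)" using dist
    by (simp add: U_def evec_def ent g1 g2 g3 g4 h g1' g2' g3' g4'; simp add: pp rr bq ds)
  have kpr: "A p r = (\<Sum>u\<leftarrow>U. u p * u r)" using dist
    by (simp add: U_def evec_def ent g1 g2 g3 g4 h g1' g2' g3' g4'; simp add: pp rr bq ds)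
  have kps: "A p s = (\<Sum>u\<leftarrow>U. u p * u s)" using dist
    by (simp add: U_def evec_def ent g1 g2 g3 g4 h g1' g2' g3' g4'; simp add: pp rr bq ds)
  have kqp: "A q p = (\<Sum>u\<leftarrow>U. u q * u p)" using dist
    by (simp add: U_def evec_def ent g1 g2 g3 g4 h g1' g2' g3' g4'; simp add: pp rr bq ds)
  have kqq: "A q q = (\<Sum>u\<leftarrow>U. u q * u q)" using dist
    by (simp add: U_def evec_def ent g1 g2 g3 g4 h g1' g2' g3' g4'; simp add: pp rr bq ds)
  have kqr: "A q r = (\<Sum>u\<leftarrow>U. u q * u r)" using dist
    by (simp add: U_def evec_def ent g1 g2 g3 g4 h g1' g2' g3' g4'; simp add: pp rr bq ds)
  have kqs: "A q s = (\<Sum>u\<leftarrow>U. u q * u s)" using dist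
    by (simp add: U_def evec_def ent g1 g2 g3 g4 h g1' g2' g3' g4'; simp add: pp rr bq ds)
  have krp: "A r p = (\<Sum>u\<leftarrow>U. u r * u p)" using dist
    by (simp add: U_def evec_def ent g1 g2 g3 g4 h g1' g2' g3' g4'; simp add: pp rr bq ds)
  have krq: "A r q = (\<Sum>u\<leftarrow>U. u r * u q)" using dist
    by (simp add: U_def evec_def ent g1 g2 g3 g4 h g1' g2' g3' g4'; simp add: pp rr bq ds)
  have krr: "A r r = (\<Sum>u\<leftarrow>U. u r * u r)" using dist
    by (simp add: U_def evec_def ent g1 g2 g3 g4 h g1' g2' g3' g4'; simp add: pp rr bq ds)
  have krs: "A r s = (\<Sum>u\<leftarrow>U. u r * u s)" using dist
    by (simp add: U_def evec_def ent g1 g2 g3 g4 h g1' g2' g3' g4'; simp add: pp rr bq ds)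
  have ksp: "A s p = (\<Sum>u\<leftarrow>U. u s * u p)" using dist
    by (simp add: U_def evec_def ent g1 g2 g3 g4 h g1' g2' g3' g4'; simp add: pp rr bq ds)
  have ksq: "A s q = (\<Sum>u\<leftarrow>U. u s * u q)" using dist
    by (simp add: U_def evec_def ent g1 g2 g3 g4 h g1' g2' g3' g4'; simp add: pp rr bq ds)
  have ksr: "A s r = (\<Sum>u\<leftarrow>U. u s * u r)" using dist
    by (simp add: U_def evec_def ent g1 g2 g3 g4 h g1' g2' g3' g4'; simp add: pp rr bq ds)
  have kss: "A s s = (\<Sum>u\<leftarrow>U. u s * u s)" using dist
    by (simp add: U_def evec_def ent g1 g2 g3 g4 h g1' g2' g3' g4'; simp add: pp rr bq ds)
  have key: "A i j = (\<Sum>u\<leftarrow>U. u i * u j)" if "i \<in> {p, q, r, s}" "j \<in> {p, q, r, s}" for i j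
    using that apply (elim insertE emptyE) using kpp kpq kpr kps kqp kqq kqr kqs krp krq krr krs ksp ksq ksr kss by simp_all
  have "\<forall>i<n. \<forall>j<n. A i j = (\<Sum>u\<leftarrow>U. u i * u j)"
  proof (intro allI impI)
    fix i j assume "i < n" "j < n"
    then have "i \<in> {p, q, r, s}" "j \<in> {p, q, r, s}" using all by auto
    then show "A i j = (\<Sum>u\<leftarrow>U. u i * u j)" by (rule key)
  qed
  then show ?thesis unfolding cpm_def using Unn by blast
qed



lemma five_false:
  assumes "a < n" "b < n" "c < n" "d < n" "e < n" "n \<le> (4::nat)" "distinct [a, b, c, d, e]"
  shows False
proof -
  have "card {a, b, c, d, e} = 5" using assms(7) by simp
  moreover have "card {a, b, c, d, e} \<le> card {..<n}"
    by (rule card_mono) (use assms in auto)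
  ultimately show False using assms(6) by simp
qed

lemma cpm_add:
  assumes "cpm n A'" "\<forall>i. 0 \<le> u i" "\<forall>i<n. \<forall>j<n. A i j = A' i j + u i * u j"
  shows "cpm n A"
proof -
  obtain U where U: "\<forall>v\<in>set U. \<forall>i. 0 \<le> v i" "\<forall>i<n. \<forall>j<n. A' i j = (\<Sum>v\<leftarrow>U. v i * v j)"
    using assms(1) unfolding cpm_def by blast
  show ?thesis unfolding cpm_def
    by (rule exI[of _ "u # U"]) (use U assms(2,3) in auto)
qed

lemma live_nb:
  assumes "dnn n A" "k < n" "i < n" "0 < A k i"
  shows "0 < A i i" "0 < A k k"
proof -
  have "(A k i)^2 \<le> A k k * A i i" by (rule dnn_offdiag[OF assms(1-3)])
  moreover have "0 \<le> A k k" "0 \<le> A i i" using assms unfolding dnn_def by auto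
  moreover have "0 < (A k i)^2" using assms(4) by simp
  ultimately show "0 < A i i" "0 < A k k"
    by (metis less_eq_real_def mult_zero_left mult_zero_right not_le)+
qed

lemma dnn_cp: "dnn n A \<Longrightarrow> n \<le> 4 \<Longrightarrow> cpm n A"
proof (induction "card (nzs n A)" arbitrary: A rule: less_induct)
  case less
  note dA = less.prems(1) and n4 = less.prems(2)
  have sym: "\<And>i j. i < n \<Longrightarrow> j < n \<Longrightarrow> A j i = A i j" and nn: "\<And>i j. i < n \<Longrightarrow> j < n \<Longrightarrow> 0 \<le> A i j"
    using dA unfolding dnn_def by auto
  let ?smp = "\<lambda>k. \<forall>i<n. \<forall>j<n. i \<noteq> k \<longrightarrow> j \<noteq> k \<longrightarrow> i \<noteq> j \<longrightarrow> 0 < A k i \<longrightarrow> 0 < A k j \<longrightarrow> 0 < A i j"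
  show ?case
  proof (cases "\<exists>k<n. 0 < A k k \<and> ?smp k")
    case True
    then obtain k where k: "k < n" "0 < A k k" "?smp k" by blast
    from elim_step[OF dA k] obtain A' u where A': "dnn n A'" "\<forall>i. 0 \<le> u i"
      "\<forall>i<n. \<forall>j<n. A i j = A' i j + u i * u j" "nzs n A' \<subset> nzs n A" by blast
    have "card (nzs n A') < card (nzs n A)" by (rule psubset_card_mono[OF finite_nzs A'(4)])
    then have "cpm n A'" using less.hyps A'(1) n4 by blast
    then show ?thesis by (rule cpm_add[OF _ A'(2,3)])
  next
    case nosmp: False
    show ?thesis
    proof (cases "\<forall>i<n. \<forall>j<n. A i j = 0")
      case True
      then show ?thesis unfolding cpm_def by (intro exI[of _ "[]"]) simp
    next
      case False
      then obtain i0 j0 where ij0: "i0 < n" "j0 < n" "A i0 j0 \<noteq> 0" by blast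
      then have "0 < A i0 j0" using nn[OF ij0(1,2)] by simp
      then have live0: "0 < A i0 i0" using live_nb[OF dA ij0(1,2)] by simp
      have ns: "\<exists>i j. i < n \<and> j < n \<and> i \<noteq> k \<and> j \<noteq> k \<and> i \<noteq> j \<and> 0 < A k i \<and> 0 < A k j \<and> A i j = 0"
        if "k < n" "0 < A k k" for k
      proof -
        from nosmp that have "\<not> ?smp k" by blast
        then obtain i j where "i < n" "j < n" "i \<noteq> k" "j \<noteq> k" "i \<noteq> j" "0 < A k i" "0 < A k j" "\<not> 0 < A i j"
          by blast
        moreover have "A i j = 0" using nn[OF \<open>i < n\<close> \<open>j < n\<close>] \<open>\<not> 0 < A i j\<close> by simp
        ultimately show ?thesis by blast
      qed
      define k0 where "k0 = i0"
      have k0: "k0 < n" "0 < A k0 k0" using ij0 live0 by (simp_all add: k0_def)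
      obtain i j where ij: "i < n" "j < n" "i \<noteq> k0" "j \<noteq> k0" "i \<noteq> j" "0 < A k0 i" "0 < A k0 j" "A i j = 0"
        using ns[OF k0] by blast
      have li: "0 < A i i" using live_nb[OF dA k0(1) ij(1) ij(6)] by simp
      have lj: "0 < A j j" using live_nb[OF dA k0(1) ij(2) ij(7)] by simp
      obtain a1 b1 where ab: "a1 < n" "b1 < n" "a1 \<noteq> i" "b1 \<noteq> i" "a1 \<noteq> b1" "0 < A i a1" "0 < A i b1" "A a1 b1 = 0"
        using ns[OF ij(1) li] by blast
      have a1j: "a1 \<noteq> j" "b1 \<noteq> j" using ab(6,7) ij(8) by auto
      obtain l where l: "l < n" "l \<noteq> k0" "l \<noteq> i" "l \<noteq> j" "0 < A i l" "A k0 l = 0"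
      proof (cases "a1 = k0")
        case True
        then show ?thesis using that[of b1] ab a1j by auto
      next
        case F1: False
        show ?thesis
        proof (cases "b1 = k0")
          case True
          then show ?thesis using that[of a1] ab a1j sym[OF ab(1) ab(2)] F1 by auto
        next
          case False
          then show ?thesis using five_false[OF k0(1) ij(1) ij(2) ab(1) ab(2) n4] ab a1j ij F1 by auto
        qed
      qed
      obtain c1 e1 where ce: "c1 < n" "e1 < n" "c1 \<noteq> j" "e1 \<noteq> j" "c1 \<noteq> e1" "0 < A j c1" "0 < A j e1" "A c1 e1 = 0"
        using ns[OF ij(2) lj] by blast
      have ci: "c1 \<noteq> i" "e1 \<noteq> i" using ce(6,7) ij(8) sym[OF ij(1) ij(2)] by auto
      have c1: "c1 = k0 \<or> c1 = l"
        using five_false[OF k0(1) ij(1) ij(2) l(1) ce(1) n4] ce ci ij l by auto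
      have e1: "e1 = k0 \<or> e1 = l"
        using five_false[OF k0(1) ij(1) ij(2) l(1) ce(2) n4] ce ci ij l by auto
      have jl: "0 < A j l" using c1 e1 ce by auto
      have allm: "\<forall>m<n. m \<in> {k0, i, l, j}"
      proof (intro allI impI)
        fix m assume "m < n"
        show "m \<in> {k0, i, l, j}"
          using five_false[OF k0(1) ij(1) ij(2) l(1) \<open>m < n\<close> n4] ij l by auto
      qed
      show ?thesis
      proof (rule c4_cp[OF dA k0(1) ij(1) l(1) ij(2) _ allm])
        show "distinct [k0, i, l, j]" using ij l by auto
        show "0 < A k0 i" by (rule ij(6))
        show "0 < A i l" by (rule l(5))
        show "0 < A l j" using jl sym[OF ij(2) l(1)] by simp
        show "0 < A j k0" using ij(7) sym[OF k0(1) ij(2)] by simp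
        show "A k0 l = 0" by (rule l(6))
        show "A i j = 0" by (rule ij(8))
      qed
    qed
  qed
qed



definition mn :: "nat \<times> nat \<Rightarrow> nat \<times> nat" where
  "mn a = (min (fst a) (snd a), max (fst a) (snd a))"

definition ee :: "nat \<times> nat \<Rightarrow> real" where
  "ee a = (if fst a = snd a then 1 else 1 / sqrt 2)"

definition TT :: "nat \<Rightarrow> (nat \<times> nat) set" where
  "TT d = {(i, j). i \<le> j \<and> j < d}"

lemma finite_TT: "finite (TT d)"
  by (rule finite_subset[of _ "{..<d} \<times> {..<d}"]) (auto simp: TT_def)

lemma Dvec_mn: "i \<le> j \<Longrightarrow> Dvec i j a = (if (i, j) = mn a then complex_of_real (ee a) else 0)"
  by (cases a) (auto simp: Dvec_def mn_def ee_def min_def max_def of_real_divide split: if_splits)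

lemma mn_TT: "a \<in> bidx d \<Longrightarrow> mn a \<in> TT d"
  by (cases a) (auto simp: bidx_def TT_def mn_def)

lemma DS_form:
  assumes "DS_state d \<rho>"
  obtains p where "\<forall>i j. i \<le> j \<and> j < d \<longrightarrow> 0 \<le> p i j" "(\<Sum>(i, j)\<in>TT d. p i j) = 1"
    "\<forall>a\<in>bidx d. \<forall>b\<in>bidx d. \<rho> a b = (if mn a = mn b then complex_of_real (p (fst (mn a)) (snd (mn a)) * ee a * ee b) else 0)"
    "\<forall>a\<in>bidx d. \<forall>b\<in>bidx d. \<rho> a b = (\<Sum>(i, j)\<in>TT d. complex_of_real (p i j) * Dvec i j a * cnj (Dvec i j b))"
proof -
  obtain p where p: "\<forall>i j. i \<le> j \<and> j < d \<longrightarrow> 0 \<le> p i j" "(\<Sum>(i, j)\<in>TT d. p i j) = 1"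
    "\<forall>a\<in>bidx d. \<forall>b\<in>bidx d. \<rho> a b = (\<Sum>(i, j)\<in>TT d. complex_of_real (p i j) * Dvec i j a * cnj (Dvec i j b))"
    using assms unfolding DS_state_def TT_def by blast
  have "\<rho> a b = (if mn a = mn b then complex_of_real (p (fst (mn a)) (snd (mn a)) * ee a * ee b) else 0)"
    if ab: "a \<in> bidx d" "b \<in> bidx d" for a b
  proof -
    have "\<rho> a b = (\<Sum>x\<in>TT d. if x = mn a then (if mn a = mn b then complex_of_real (p (fst (mn a)) (snd (mn a)) * ee a * ee b) else 0) else 0)"
      unfolding p(3)[rule_format, OF ab]
    proof (rule sum.cong[OF refl])
      fix x assume x: "x \<in> TT d"
      obtain i j where ij: "x = (i, j)" "i \<le> j" using x by (auto simp: TT_def)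
      show "(case x of (i, j) \<Rightarrow> complex_of_real (p i j) * Dvec i j a * cnj (Dvec i j b)) =
        (if x = mn a then (if mn a = mn b then complex_of_real (p (fst (mn a)) (snd (mn a)) * ee a * ee b) else 0) else 0)"
        using ij by (auto simp: Dvec_mn; metis fst_conv snd_conv)
    qed
    also have "\<dots> = (if mn a = mn b then complex_of_real (p (fst (mn a)) (snd (mn a)) * ee a * ee b) else 0)"
      using mn_TT[OF ab(1)] by (simp add: sum.delta' finite_TT)
    finally show ?thesis .
  qed
  then show ?thesis using that p by blast
qed

definition Mr :: "(nat \<Rightarrow> nat \<Rightarrow> real) \<Rightarrow> nat \<Rightarrow> nat \<Rightarrow> real" where
  "Mr p i k = p (fst (mn (i, k))) (snd (mn (i, k))) * (ee (i, k))^2"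

lemma mn_sym: "mn (k, i) = mn (i, k)" by (simp add: mn_def min.commute max.commute)
lemma ee_sym: "ee (k, i) = ee (i, k)" by (simp add: ee_def)

lemma bidx_mem[simp]: "(i, j) \<in> bidx d \<longleftrightarrow> i < d \<and> j < d" by (simp add: bidx_def)

lemma PPT_dnn:
  assumes p0: "\<forall>i j. i \<le> j \<and> j < d \<longrightarrow> 0 \<le> p i j"
    and form: "\<forall>a\<in>bidx d. \<forall>b\<in>bidx d. \<rho> a b = (if mn a = mn b then complex_of_real (p (fst (mn a)) (snd (mn a)) * ee a * ee b) else 0)"
    and ppt: "PPT d \<rho>"
  shows "dnn d (Mr p)"
proof -
  have rk: "\<rho> (i, k) (k, i) = complex_of_real (Mr p i k)" if "i < d" "k < d" for i k
    using form that by (simp add: mn_sym ee_sym Mr_def power2_eq_square)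
  have sym: "Mr p i k = Mr p k i" for i k by (simp add: Mr_def mn_sym ee_sym)
  have nn: "0 \<le> Mr p i k" if "i < d" "k < d" for i k
    using p0 that by (auto simp: Mr_def mn_def)
  have psd: "0 \<le> rqf d (Mr p) w" for w
  proof -
    define v where "v = (\<lambda>(i::nat, j::nat). if i = j then complex_of_real (w i) else 0)"
    have "qf (bidx d) (partial_transpose_B \<rho>) v = (\<Sum>i<d. \<Sum>j<d. \<Sum>k<d. \<Sum>l<d. cnj (v (i, j)) * \<rho> (i, l) (k, j) * v (k, l))"
      unfolding qf_def sum_bidx partial_transpose_B_def by simp
    also have "\<dots> = (\<Sum>i<d. \<Sum>j<d. \<Sum>k<d. \<Sum>l<d. if i = j then (if k = l then complex_of_real (w i) * \<rho> (i, l) (k, j) * complex_of_real (w k) else 0) else 0)"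
      by (intro sum.cong refl) (auto simp: v_def)
    also have "\<dots> = (\<Sum>i<d. \<Sum>j<d. if i = j then (\<Sum>k<d. \<Sum>l<d. if k = l then complex_of_real (w i) * \<rho> (i, l) (k, j) * complex_of_real (w k) else 0) else 0)"
      by (intro sum.cong refl) simp
    also have "\<dots> = (\<Sum>i<d. \<Sum>k<d. complex_of_real (w i) * \<rho> (i, k) (k, i) * complex_of_real (w k))"
      by (rule sum.cong[OF refl]) (simp only: sum.delta' finite_lessThan lessThan_iff if_True, rule sum.cong, auto)
    also have "\<dots> = complex_of_real (rqf d (Mr p) w)"
      unfolding rqf_def by (simp add: rk)
    finally have e: "qf (bidx d) (partial_transpose_B \<rho>) v = complex_of_real (rqf d (Mr p) w)" .
    have "0 \<le> Re (qf (bidx d) (partial_transpose_B \<rho>) v)" using ppt unfolding PPT_def psd_on_qf by blast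
    then show ?thesis unfolding e by simp
  qed
  show ?thesis unfolding dnn_def using sym nn psd by auto
qed



lemma cis_sum17:
  fixes m :: int
  assumes "m \<noteq> 0" "\<bar>m\<bar> < 17"
  shows "(\<Sum>s<(17::nat). cis (real s * (2 * pi * of_int m / 17))) = 0"
proof -
  define \<omega> where "\<omega> = cis (2 * pi * of_int m / 17)"
  have ne: "\<omega> \<noteq> 1"
  proof
    assume "\<omega> = 1"
    then have "cos (2 * pi * of_int m / 17) = 1" by (auto simp: \<omega>_def complex_eq_iff)
    then obtain k :: int where "2 * pi * of_int m / 17 = of_int k * 2 * pi" by (auto simp: cos_one_2pi_int)
    then have "real_of_int m = 17 * of_int k" by (simp add: field_simps)
    then have "m = 17 * k" by linarith
    then show False using assms by auto
  qed
  have "(\<Sum>s<(17::nat). cis (real s * (2 * pi * of_int m / 17))) = (\<Sum>s<(17::nat). \<omega> ^ s)"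
    by (simp add: \<omega>_def DeMoivre)
  also have "\<dots> = (\<omega> ^ 17 - 1) / (\<omega> - 1)" by (rule geometric_sum[OF ne])
  also have "\<omega> ^ 17 = 1"
  proof -
    have "real 17 * (2 * pi * of_int m / 17) = 2 * pi * real_of_int m" by simp
    then have "\<omega> ^ 17 = cis (2 * pi * real_of_int m)" unfolding \<omega>_def DeMoivre by metis
    also have "\<dots> = 1" by (rule cis_multiple_2pi) simp
    finally show ?thesis .
  qed
  finally show ?thesis by simp
qed

lemma pow2_all: "\<forall>i\<in>{..<4::nat}. \<forall>j\<in>{..<4::nat}. \<forall>k\<in>{..<4::nat}. \<forall>l\<in>{..<4::nat}.
   \<bar>(2::int)^i + 2^j - 2^k - 2^l\<bar> < 17 \<and> (((2::int)^i + 2^j - 2^k - 2^l = 0) \<longleftrightarrow> (i = k \<and> j = l \<or> i = l \<and> j = k))"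
  by (simp add: lessThan_nat_numeral)

lemma pow2_comb:
  fixes i j k l :: nat
  assumes "i < 4" "j < 4" "k < 4" "l < 4"
  shows "\<bar>(2::int)^i + 2^j - 2^k - 2^l\<bar> < 17"
    "((2::int)^i + 2^j - 2^k - 2^l = 0) \<longleftrightarrow> (i = k \<and> j = l \<or> i = l \<and> j = k)"
  using pow2_all assms by auto

definition sepsum :: "nat \<Rightarrow> (nat \<Rightarrow> nat \<Rightarrow> nat \<Rightarrow> nat \<Rightarrow> complex) \<Rightarrow> bool" where
  "sepsum d R \<longleftrightarrow> (\<exists>(n::nat) (p :: nat \<Rightarrow> real) A B.
      (\<forall>m<n. 0 \<le> p m) \<and>
      (\<forall>m<n. density_on {..<d} (A m) \<and> density_on {..<d} (B m)) \<and>
      (\<forall>i<d. \<forall>j<d. \<forall>k<d. \<forall>l<d. R i j k l = (\<Sum>m<n. complex_of_real (p m) * A m i k * B m j l)))"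

lemma rank1_density:
  fixes ph :: "nat \<Rightarrow> complex"
  assumes "(\<Sum>i<d. ph i * cnj (ph i)) = 1"
  shows "density_on {..<d} (\<lambda>i k. ph i * cnj (ph k))"
  unfolding density_on_def
proof
  show "trace_on {..<d} (\<lambda>i k. ph i * cnj (ph k)) = 1" using assms by (simp add: trace_on_def)
  show "psd_on {..<d} (\<lambda>i k. ph i * cnj (ph k))" unfolding psd_on_qf
  proof
    fix v :: "nat \<Rightarrow> complex"
    let ?z = "\<Sum>a<d. cnj (v a) * ph a"
    have cz: "cnj ?z = (\<Sum>b<d. cnj (ph b) * v b)" by (simp add: mult.commute)
    have "qf {..<d} (\<lambda>i k. ph i * cnj (ph k)) v = ?z * (\<Sum>b<d. cnj (ph b) * v b)"
      unfolding qf_def sum_product by (simp add: mult.assoc)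
    also have "\<dots> = ?z * cnj ?z" by (simp only: cz)
    also have "\<dots> = complex_of_real (Re ?z ^ 2 + Im ?z ^ 2)" by (rule complex_mult_cnj)
    finally show "qf {..<d} (\<lambda>i k. ph i * cnj (ph k)) v \<in> \<real> \<and> 0 \<le> Re (qf {..<d} (\<lambda>i k. ph i * cnj (ph k)) v)"
      by simp
  qed
qed

lemma sepsum_single:
  fixes u :: "nat \<Rightarrow> real"
  assumes u0: "\<forall>i. 0 \<le> u i" and d4: "d \<le> 4"
  shows "sepsum d (\<lambda>i j k l. if i = k \<and> j = l \<or> i = l \<and> j = k then complex_of_real (u i * u j) else 0)"
proof (cases "(\<Sum>i<d. u i) = 0")
  case True
  then have z: "\<forall>i<d. u i = 0" using u0 by (simp add: sum_nonneg_eq_0_iff)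
  show ?thesis unfolding sepsum_def
    by (rule exI[of _ 0]) (use z in auto)
next
  case False
  define S where "S = (\<Sum>i<d. u i)"
  have Spos: "0 < S"
  proof -
    have "0 \<le> S" unfolding S_def using u0 by (simp add: sum_nonneg)
    then show ?thesis using False unfolding S_def by simp
  qed
  define r where "r i = sqrt (u i / S)" for i
  have rr: "r i * r i = u i / S" for i using u0 Spos by (simp add: r_def)
  define ph where "ph s i = complex_of_real (r i) * cis (real s * (2 * pi * 2 ^ i / 17))" for s :: nat and i :: nat
  define A where "A s i k = ph s i * cnj (ph s k)" for s i k
  define p where "p (s::nat) = S * S / 17" for s
  have dens: "density_on {..<d} (A s)" for s
  proof -
    have "(\<Sum>i<d. ph s i * cnj (ph s i)) = (\<Sum>i<d. complex_of_real (u i / S))"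
    proof (rule sum.cong[OF refl])
      fix i
      have "ph s i * cnj (ph s i) = complex_of_real (r i * r i) * (cis (real s * (2 * pi * 2 ^ i / 17)) * cnj (cis (real s * (2 * pi * 2 ^ i / 17))))"
        by (simp add: ph_def algebra_simps)
      also have "cis (real s * (2 * pi * 2 ^ i / 17)) * cnj (cis (real s * (2 * pi * 2 ^ i / 17))) = 1"
        by (simp add: cis_cnj cis_mult)
      finally show "ph s i * cnj (ph s i) = complex_of_real (u i / S)" by (simp add: rr)
    qed
    also have "\<dots> = complex_of_real ((\<Sum>i<d. u i) / S)" by (simp add: sum_divide_distrib)
    also have "\<dots> = 1" using Spos by (simp add: S_def)
    finally show ?thesis unfolding A_def[abs_def] by (rule rank1_density)
  qed
  have pt: "A s i k * A s j l = complex_of_real (r i * r k * r j * r l) *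
      cis (real s * (2 * pi * of_int ((2::int)^i + 2^j - 2^k - 2^l) / 17))" for s i j k l
  proof -
    have "A s i k * A s j l = complex_of_real (r i * r k * r j * r l) *
      (cis (real s * (2 * pi * 2 ^ i / 17)) * cis (- (real s * (2 * pi * 2 ^ k / 17))) *
       cis (real s * (2 * pi * 2 ^ j / 17)) * cis (- (real s * (2 * pi * 2 ^ l / 17))))"
      by (simp add: A_def ph_def cis_cnj algebra_simps)
    also have "cis (real s * (2 * pi * 2 ^ i / 17)) * cis (- (real s * (2 * pi * 2 ^ k / 17))) *
       cis (real s * (2 * pi * 2 ^ j / 17)) * cis (- (real s * (2 * pi * 2 ^ l / 17)))
       = cis (real s * (2 * pi * of_int ((2::int)^i + 2^j - 2^k - 2^l) / 17))"
      by (simp add: cis_mult algebra_simps add_divide_distrib diff_divide_distrib)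
    finally show ?thesis .
  qed
  show ?thesis unfolding sepsum_def
  proof (rule exI[of _ 17], rule exI[of _ p], rule exI[of _ A], rule exI[of _ A], intro conjI)
    show "\<forall>m<17. 0 \<le> p m" by (simp add: p_def)
    show "\<forall>m<17. density_on {..<d} (A m) \<and> density_on {..<d} (A m)" using dens by simp
    show "\<forall>i<d. \<forall>j<d. \<forall>k<d. \<forall>l<d. (if i = k \<and> j = l \<or> i = l \<and> j = k then complex_of_real (u i * u j) else 0) =
      (\<Sum>m<17. complex_of_real (p m) * A m i k * A m j l)"
    proof (intro allI impI)
    fix i j k l assume ijkl: "i < d" "j < d" "k < d" "l < d"
    then have ijkl4: "i < 4" "j < 4" "k < 4" "l < 4" using d4 by auto
    have "(\<Sum>m<17. complex_of_real (p m) * A m i k * A m j l)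
       = complex_of_real (S * S / 17 * (r i * r k * r j * r l)) * (\<Sum>m<(17::nat). cis (real m * (2 * pi * of_int ((2::int)^i + 2^j - 2^k - 2^l) / 17)))"
      by (simp add: pt p_def sum_distrib_left mult.assoc)
    also have "\<dots> = (if i = k \<and> j = l \<or> i = l \<and> j = k then complex_of_real (u i * u j) else 0)"
    proof (cases "i = k \<and> j = l \<or> i = l \<and> j = k")
      case True
      then have m0: "(2::int)^i + 2^j - 2^k - 2^l = 0" using pow2_comb(2)[OF ijkl4] by simp
      have "r i * r k * r j * r l = (r i * r i) * (r j * r j)" using True by (auto simp: algebra_simps)
      also have "\<dots> = u i * u j / (S * S)" by (simp add: rr)
      finally have "S * S / 17 * (r i * r k * r j * r l) * 17 = u i * u j" using Spos by simp
      then show ?thesis using True by (simp add: m0)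
    next
      case False
      then have "(2::int)^i + 2^j - 2^k - 2^l \<noteq> 0" using pow2_comb(2)[OF ijkl4] by simp
      then have S0: "(\<Sum>m<(17::nat). cis (real m * (2 * pi * of_int ((2::int)^i + 2^j - 2^k - 2^l) / 17))) = 0"
        using cis_sum17 pow2_comb(1)[OF ijkl4] by blast
      show ?thesis unfolding S0 using False by auto
    qed
    finally show "(if i = k \<and> j = l \<or> i = l \<and> j = k then complex_of_real (u i * u j) else 0) =
      (\<Sum>m<17. complex_of_real (p m) * A m i k * A m j l)" by simp
  qed
  qed
qed



lemma sum_split_add: "(\<Sum>m<n1 + n2. f m) = (\<Sum>m<n1. f m) + (\<Sum>m<n2. f (m + n1))" for f :: "nat \<Rightarrow> complex"
  by (induction n2) (auto simp: add.commute add.left_commute)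

lemma sepsum_zero: "sepsum d (\<lambda>i j k l. 0)"
  unfolding sepsum_def by (rule exI[of _ 0]) simp

lemma sepsum_add:
  assumes "sepsum d R1" "sepsum d R2"
  shows "sepsum d (\<lambda>i j k l. R1 i j k l + R2 i j k l)"
proof -
  obtain n1 :: nat and p1 :: "nat \<Rightarrow> real" and A1 B1 where h1: "\<forall>m<n1. 0 \<le> p1 m"
    "\<forall>m<n1. density_on {..<d} (A1 m) \<and> density_on {..<d} (B1 m)"
    "\<forall>i<d. \<forall>j<d. \<forall>k<d. \<forall>l<d. R1 i j k l = (\<Sum>m<n1. complex_of_real (p1 m) * A1 m i k * B1 m j l)"
    using assms(1) unfolding sepsum_def by (elim exE conjE) (rule that, assumption+)
  obtain n2 :: nat and p2 :: "nat \<Rightarrow> real" and A2 B2 where h2: "\<forall>m<n2. 0 \<le> p2 m"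
    "\<forall>m<n2. density_on {..<d} (A2 m) \<and> density_on {..<d} (B2 m)"
    "\<forall>i<d. \<forall>j<d. \<forall>k<d. \<forall>l<d. R2 i j k l = (\<Sum>m<n2. complex_of_real (p2 m) * A2 m i k * B2 m j l)"
    using assms(2) unfolding sepsum_def by (elim exE conjE) (rule that, assumption+)
  define p where "p m = (if m < n1 then p1 m else p2 (m - n1))" for m
  define A where "A m = (if m < n1 then A1 m else A2 (m - n1))" for m
  define B where "B m = (if m < n1 then B1 m else B2 (m - n1))" for m
  show ?thesis unfolding sepsum_def
  proof (rule exI[of _ "n1 + n2"], rule exI[of _ p], rule exI[of _ A], rule exI[of _ B], intro conjI)
    show "\<forall>m<n1 + n2. 0 \<le> p m" using h1(1) h2(1) by (auto simp: p_def)
    show "\<forall>m<n1 + n2. density_on {..<d} (A m) \<and> density_on {..<d} (B m)" using h1(2) h2(2) by (auto simp: A_def B_def)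
    show "\<forall>i<d. \<forall>j<d. \<forall>k<d. \<forall>l<d. R1 i j k l + R2 i j k l = (\<Sum>m<n1 + n2. complex_of_real (p m) * A m i k * B m j l)"
      using h1(3) h2(3) by (simp add: sum_split_add p_def A_def B_def)
  qed
qed

lemma sepsum_list:
  assumes "\<forall>u\<in>set U. \<forall>i. 0 \<le> u i" "d \<le> 4"
  shows "sepsum d (\<lambda>i j k l. \<Sum>u\<leftarrow>U. if i = k \<and> j = l \<or> i = l \<and> j = k then complex_of_real (u i * u j) else 0)"
  using assms(1)
proof (induction U)
  case Nil
  then show ?case using sepsum_zero by simp
next
  case (Cons u U)
  have "sepsum d (\<lambda>i j k l. (if i = k \<and> j = l \<or> i = l \<and> j = k then complex_of_real (u i * u j) else 0)
     + (\<Sum>u\<leftarrow>U. if i = k \<and> j = l \<or> i = l \<and> j = k then complex_of_real (u i * u j) else 0))"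
    by (rule sepsum_add[OF sepsum_single[OF _ assms(2)] Cons.IH]) (use Cons.prems in auto)
  then show ?case by simp
qed



lemma Dvec_norm:
  assumes "i \<le> j" "j < d"
  shows "(\<Sum>a\<in>bidx d. Dvec i j a * cnj (Dvec i j a)) = 1"
proof -
  have fin: "finite (bidx d)" by (simp add: bidx_def)
  have "(\<Sum>a\<in>bidx d. Dvec i j a * cnj (Dvec i j a)) = (\<Sum>a\<in>bidx d. if mn a = (i, j) then complex_of_real (ee a * ee a) else 0)"
    by (rule sum.cong[OF refl]) (auto simp: Dvec_mn[OF assms(1)])
  also have "\<dots> = (\<Sum>a\<in>{a \<in> bidx d. mn a = (i, j)}. complex_of_real (ee a * ee a))"
    by (rule sum.inter_filter[OF fin, symmetric])
  also have "\<dots> = 1"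
  proof (cases "i = j")
    case True
    have "{a \<in> bidx d. mn a = (i, j)} = {(i, i)}" using True assms
      by (auto simp: mn_def bidx_def min_def max_def split: if_splits)
    then show ?thesis using True by (simp add: ee_def)
  next
    case False
    have "{a \<in> bidx d. mn a = (i, j)} = {(i, j), (j, i)}" using False assms
      by (auto simp: mn_def bidx_def min_def max_def split: if_splits)
    moreover have h1: "ee (i, j) * ee (i, j) = 1 / 2" and h2: "ee (j, i) * ee (j, i) = 1 / 2"
      using False by (simp_all add: ee_def)
    ultimately show ?thesis using False by (simp add: h1 h2 del: of_real_mult)
  qed
  finally show ?thesis .
qed

lemma trace_DS:
  assumes TT1: "(\<Sum>(i, j)\<in>TT d. p i j) = 1"
    and form: "\<forall>a\<in>bidx d. \<forall>b\<in>bidx d. \<rho> a b = (\<Sum>(i, j)\<in>TT d. complex_of_real (p i j) * Dvec i j a * cnj (Dvec i j b))"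
  shows "(\<Sum>i<d. \<Sum>j<d. \<rho> (i, j) (i, j)) = 1"
proof -
  have "(\<Sum>i<d. \<Sum>j<d. \<rho> (i, j) (i, j)) = (\<Sum>a\<in>bidx d. \<rho> a a)" by (simp add: sum_bidx)
  also have "\<dots> = (\<Sum>a\<in>bidx d. \<Sum>x\<in>TT d. complex_of_real (p (fst x) (snd x)) * (Dvec (fst x) (snd x) a * cnj (Dvec (fst x) (snd x) a)))"
    using form by (intro sum.cong refl) (auto simp: case_prod_beta mult.assoc)
  also have "\<dots> = (\<Sum>x\<in>TT d. complex_of_real (p (fst x) (snd x)) * (\<Sum>a\<in>bidx d. Dvec (fst x) (snd x) a * cnj (Dvec (fst x) (snd x) a)))"
    by (simp add: sum.swap[of _ "bidx d"] sum_distrib_left)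
  also have "\<dots> = (\<Sum>x\<in>TT d. complex_of_real (p (fst x) (snd x)))"
    by (rule sum.cong[OF refl]) (auto simp: TT_def Dvec_norm)
  also have "\<dots> = complex_of_real (\<Sum>(i, j)\<in>TT d. p i j)" by (simp add: case_prod_beta)
  also have "\<dots> = 1" using TT1 by simp
  finally show ?thesis .
qed

lemma trace_sep:
  assumes dens: "\<forall>m<n. density_on {..<d} (A m) \<and> density_on {..<d} (B m)"
    and rep: "\<forall>i<d. \<forall>j<d. \<forall>k<d. \<forall>l<d. \<rho> (i, j) (k, l) = (\<Sum>m<n. complex_of_real (p m) * A m i k * B m j l)"
  shows "(\<Sum>i<d. \<Sum>j<d. \<rho> (i, j) (i, j)) = complex_of_real (\<Sum>m<n. p m)"
proof -
  have "(\<Sum>i<d. \<Sum>j<d. \<rho> (i, j) (i, j)) = (\<Sum>i<d. \<Sum>j<d. \<Sum>m<n. complex_of_real (p m) * A m i i * B m j j)"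
    using rep by simp
  also have "\<dots> = (\<Sum>m<n. complex_of_real (p m) * ((\<Sum>i<d. A m i i) * (\<Sum>j<d. B m j j)))"
  proof -
    have "(\<Sum>i<d. \<Sum>j<d. \<Sum>m<n. complex_of_real (p m) * A m i i * B m j j) = (\<Sum>i<d. \<Sum>m<n. \<Sum>j<d. complex_of_real (p m) * A m i i * B m j j)"
      by (rule sum.cong[OF refl], rule sum.swap)
    also have "\<dots> = (\<Sum>m<n. \<Sum>i<d. \<Sum>j<d. complex_of_real (p m) * A m i i * B m j j)"
      by (rule sum.swap)
    also have "\<dots> = (\<Sum>m<n. complex_of_real (p m) * ((\<Sum>i<d. A m i i) * (\<Sum>j<d. B m j j)))"
      unfolding sum_product by (simp add: sum_distrib_left mult.assoc)
    finally show ?thesis .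
  qed
  also have "\<dots> = (\<Sum>m<n. complex_of_real (p m))"
    using dens by (intro sum.cong refl) (simp add: density_on_def trace_on_def)
  finally show ?thesis by simp
qed

theorem theorem3:
  fixes d :: nat and \<rho> :: "nat \<times> nat \<Rightarrow> nat \<times> nat \<Rightarrow> complex"
  assumes "2 \<le> d" and "d \<le> 4" and "DS_state d \<rho>"
  shows "separable d \<rho> \<longleftrightarrow> PPT d \<rho>"
proof
  assume "separable d \<rho>"
  then show "PPT d \<rho>" by (rule sep_PPT)
next
  assume ppt: "PPT d \<rho>"
  obtain p where p0: "\<forall>i j. i \<le> j \<and> j < d \<longrightarrow> 0 \<le> p i j" and TT1: "(\<Sum>(i, j)\<in>TT d. p i j) = 1"
    and form: "\<forall>a\<in>bidx d. \<forall>b\<in>bidx d. \<rho> a b = (if mn a = mn b then complex_of_real (p (fst (mn a)) (snd (mn a)) * ee a * ee b) else 0)"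
    and form2: "\<forall>a\<in>bidx d. \<forall>b\<in>bidx d. \<rho> a b = (\<Sum>(i, j)\<in>TT d. complex_of_real (p i j) * Dvec i j a * cnj (Dvec i j b))"
    using DS_form[OF assms(3)] by blast
  have "dnn d (Mr p)" by (rule PPT_dnn[OF p0 form ppt])
  then have "cpm d (Mr p)" using assms(2) by (rule dnn_cp)
  then obtain U where U: "\<forall>u\<in>set U. \<forall>i. 0 \<le> u i" "\<forall>i<d. \<forall>j<d. Mr p i j = (\<Sum>u\<leftarrow>U. u i * u j)"
    unfolding cpm_def by blast
  have ss: "sepsum d (\<lambda>i j k l. \<Sum>u\<leftarrow>U. if i = k \<and> j = l \<or> i = l \<and> j = k then complex_of_real (u i * u j) else 0)"
    by (rule sepsum_list[OF U(1) assms(2)])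
  have eq: "\<rho> (i, j) (k, l) = (\<Sum>u\<leftarrow>U. if i = k \<and> j = l \<or> i = l \<and> j = k then complex_of_real (u i * u j) else 0)"
    if "i < d" "j < d" "k < d" "l < d" for i j k l
  proof -
    have mneq: "mn (i, j) = mn (k, l) \<longleftrightarrow> (i = k \<and> j = l \<or> i = l \<and> j = k)"
      by (auto simp: mn_def min_def max_def split: if_splits)
    have r: "\<rho> (i, j) (k, l) = (if mn (i, j) = mn (k, l) then complex_of_real (p (fst (mn (i, j))) (snd (mn (i, j))) * ee (i, j) * ee (k, l)) else 0)"
      using form that by simp
    show ?thesis
    proof (cases "i = k \<and> j = l \<or> i = l \<and> j = k")
      case True
      then have m: "mn (i, j) = mn (k, l)" using mneq by simp
      have e: "ee (k, l) = ee (i, j)" using True by (auto simp: ee_def)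
      have "\<rho> (i, j) (k, l) = complex_of_real (p (fst (mn (i, j))) (snd (mn (i, j))) * ee (i, j) * ee (k, l))"
        using r m by simp
      also have "\<dots> = complex_of_real (Mr p i j)" unfolding e by (simp add: Mr_def power2_eq_square mult.assoc)
      also have "\<dots> = complex_of_real (\<Sum>u\<leftarrow>U. u i * u j)" using U(2) that by simp
      also have "\<dots> = (\<Sum>u\<leftarrow>U. complex_of_real (u i * u j))" by (induction U) simp_all
      also have "\<dots> = (\<Sum>u\<leftarrow>U. if i = k \<and> j = l \<or> i = l \<and> j = k then complex_of_real (u i * u j) else 0)"
        using True by simp
      finally show ?thesis .
    next
      case False
      then have m: "mn (i, j) \<noteq> mn (k, l)" using mneq by simp
      have "(\<Sum>u\<leftarrow>U. if i = k \<and> j = l \<or> i = l \<and> j = k then complex_of_real (u i * u j) else 0) = 0"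
        by (simp only: if_not_P[OF False]) simp
      then show ?thesis using r m by simp
    qed
  qed
  obtain n :: nat and q :: "nat \<Rightarrow> real" and A B where h: "\<forall>m<n. 0 \<le> q m"
    "\<forall>m<n. density_on {..<d} (A m) \<and> density_on {..<d} (B m)"
    "\<forall>i<d. \<forall>j<d. \<forall>k<d. \<forall>l<d. (\<Sum>u\<leftarrow>U. if i = k \<and> j = l \<or> i = l \<and> j = k then complex_of_real (u i * u j) else 0) = (\<Sum>m<n. complex_of_real (q m) * A m i k * B m j l)"
    using ss unfolding sepsum_def by (elim exE conjE) (rule that, assumption+)
  have rep: "\<forall>i<d. \<forall>j<d. \<forall>k<d. \<forall>l<d. \<rho> (i, j) (k, l) = (\<Sum>m<n. complex_of_real (q m) * A m i k * B m j l)"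
    using h(3) eq by simp
  have "complex_of_real (\<Sum>m<n. q m) = 1"
    using trace_sep[OF h(2) rep] trace_DS[OF TT1 form2] by simp
  then have q1: "(\<Sum>m<n. q m) = 1" by (metis of_real_eq_1_iff)
  show "separable d \<rho>" unfolding separable_def using h(1,2) q1 rep by blast
qed

end
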